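(* Let $A_1,\ldots,A_N\in\mathbb{R}^{n\times n}$ be entrywise nonnegative (so the system below is positive) and let $h_1,\ldots,h_N>0$ be constant delays. Consider the delay-difference equation $$x(t)=\sum_{i=1}^NA_ix(t-h_i).$$ The following statements are equivalent: (i) The delay-difference equation is asymptotically stable (strongly stable). (ii) $\rho\left(\sum_{i=1}^NA_ie^{-j\omega_i}\right)<1$ for all $\omega_1,\ldots,\omega_N\in\mathbb{R}$ (with $j$ the imaginary unit). (iii) $\rho\left(\sum_{i=1}^NA_i\right)<1$. (iv) There exists $\mu\in\mathbb{R}^{nN}_{>0}$ such that $\mu^T\left(-I_{nN}+(\mathbf{1}_N\otimes I_n)[A_1\ \cdots\ A_N]\right)<0$. (v) There exists $\mu\in\mathbb{R}^{n}_{>0}$ such that $\mu^T\left(\sum_{i=1}^NA_i-I_n\right)<0$. (vi) There exist diagonal positive definite matrices $Q_1,\ldots,Q_N\in\mathbb{R}^{n\times n}$ such that, with $Q:=\mathrm{diag}(Q_1,\ldots,Q_N)$, $$\begin{bmatrix}-Q & \star\\ Q(\mathbf{1}_N\otimes I_n)[A_1\ \cdots\ A_N] & -Q\end{bmatrix}\prec0.$$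
   Context: $\rho(\cdot)$ denotes the spectral radius; $\mathbf{1}_N$ is the vector of ones and $\otimes$ the Kronecker product; vector inequalities are componentwise; $\star$ denotes the transpose of the symmetric block; $\prec0$ means negative definite. *)

theory Defs
  imports "HOL-Analysis.Analysis"
begin

text \<open>State dimension n is the finite index type 'n; the number of delays N is the
finite index type 'k. Vectors in R^{nN} are indexed by 'k \<times> 'n, where (i,a)
is component a of block i.\<close>

definition spec_rad :: "complex^'n^'n \<Rightarrow> real" where
  "spec_rad M = Sup (cmod ` {l. \<exists>v. v \<noteq> 0 \<and> M *v v = l *s v})"

definition cmat :: "real^'m^'n \<Rightarrow> complex^'m^'n" where
  "cmat M = (\<chi> i j. complex_of_real (M $ i $ j))"

definition dde_solution :: "('k::finite \<Rightarrow> real^'n^'n) \<Rightarrow> ('k \<Rightarrow> real) \<Rightarrow> (real \<Rightarrow> real^'n) \<Rightarrow> bool" where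
  "dde_solution A h x \<longleftrightarrow> (\<forall>t\<ge>0. x t = (\<Sum>i\<in>UNIV. A i *v x (t - h i)))"

definition max_delay :: "('k::finite \<Rightarrow> real) \<Rightarrow> real" where
  "max_delay h = Max (range h)"

definition dde_asymp_stable :: "('k::finite \<Rightarrow> real^'n^'n) \<Rightarrow> ('k \<Rightarrow> real) \<Rightarrow> bool" where
  "dde_asymp_stable A h \<longleftrightarrow>
     (\<forall>\<epsilon>>0. \<exists>\<delta>>0. \<forall>x. dde_solution A h x \<and>
          (\<forall>t\<in>{- max_delay h..<0}. norm (x t) \<le> \<delta>) \<longrightarrow> (\<forall>t\<ge>0. norm (x t) \<le> \<epsilon>)) \<and>
     (\<forall>x. dde_solution A h x \<and> bounded (x ` {- max_delay h..<0}) \<longrightarrow> (x \<longlongrightarrow> 0) at_top)"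

text \<open>(1_N \<otimes> I_n), an nN \<times> n matrix.\<close>
definition ones_kron_id :: "real^'n^('k::finite \<times> 'n)" where
  "ones_kron_id = (\<chi> p b. if snd p = b then 1 else 0)"

text \<open>Block row [A_1 ... A_N], an n \<times> nN matrix.\<close>
definition block_row :: "('k::finite \<Rightarrow> real^'n^'n) \<Rightarrow> real^('k \<times> 'n)^'n" where
  "block_row A = (\<chi> a q. A (fst q) $ a $ snd q)"

definition block_diag :: "('k::finite \<Rightarrow> real^'n^'n) \<Rightarrow> real^('k \<times> 'n)^('k \<times> 'n)" where
  "block_diag Q = (\<chi> p q. if fst p = fst q then Q (fst p) $ snd p $ snd q else 0)"

definition block2 :: "real^'m^'m \<Rightarrow> real^'m^'m \<Rightarrow> real^'m^'m \<Rightarrow> real^'m^'m \<Rightarrow> real^('m + 'm)^('m + 'm)" where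
  "block2 X Y Z W = (\<chi> p q. case (p, q) of
       (Inl i, Inl j) \<Rightarrow> X $ i $ j | (Inl i, Inr j) \<Rightarrow> Y $ i $ j
     | (Inr i, Inl j) \<Rightarrow> Z $ i $ j | (Inr i, Inr j) \<Rightarrow> W $ i $ j)"

definition is_diagonal :: "real^'n^'n \<Rightarrow> bool" where
  "is_diagonal M \<longleftrightarrow> (\<forall>i j. i \<noteq> j \<longrightarrow> M $ i $ j = 0)"

definition pos_def :: "real^'n^'n \<Rightarrow> bool" where
  "pos_def M \<longleftrightarrow> transpose M = M \<and> (\<forall>v. v \<noteq> 0 \<longrightarrow> v \<bullet> (M *v v) > 0)"

definition neg_def :: "real^'n^'n \<Rightarrow> bool" where
  "neg_def M \<longleftrightarrow> transpose M = M \<and> (\<forall>v. v \<noteq> 0 \<longrightarrow> v \<bullet> (M *v v) < 0)"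

end

theory Submission
  imports Defs "HOL-Computational_Algebra.Fundamental_Theorem_Algebra"
begin

definition Mpow :: "complex^'n^'n \<Rightarrow> nat \<Rightarrow> complex^'n \<Rightarrow> complex^'n" where
 "Mpow M i u = ((\<lambda>w. M *v w) ^^ i) u"

definition pe :: "complex^'n^'n \<Rightarrow> complex poly \<Rightarrow> complex^'n \<Rightarrow> complex^'n" where
 "pe M p = fold_coeffs (\<lambda>a f w. a *s w + M *v f w) p (\<lambda>w. 0)"

lemma pe_0[simp]: "pe M 0 u = 0" by (simp add: pe_def)

lemma pe_pCons: "pe M (pCons a p) u = a *s u + M *v pe M p u"
proof (cases "a = 0")
  case False
  then show ?thesis by (simp add: pe_def fold_coeffs_pCons_coeff_not_0_eq)
next
  case a: True
  show ?thesis
  proof (cases "p = 0")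
    case True then show ?thesis using a by (simp add: pe_def)
  next
    case False then show ?thesis by (simp add: pe_def fold_coeffs_pCons_not_0_0_eq)
  qed
qed

lemma pe_add: "pe M (p + q) u = pe M p u + pe M q u"
proof (induction p q rule: poly_induct2)
  case 0 then show ?case by simp
next
  case (pCons a p b q) then show ?case
    by (simp add: pe_pCons matrix_vector_right_distrib vector_sadd_rdistrib algebra_simps)
qed

lemma pe_smult: "pe M (smult c p) u = c *s pe M p u"
proof (induction p)
  case 0 then show ?case by simp
next
  case (pCons a p) then show ?case
    by (simp add: pe_pCons vector_add_ldistrib vector_smult_assoc vector_scalar_commute)
qed

lemma pe_lin: "pe M ([:-r,1:] * q) u = M *v pe M q u - r *s pe M q u"
proof -
  have e: "[:-r,1:] * q = smult (-r) q + pCons 0 q" by simp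
  have "pe M ([:-r,1:] * q) u = pe M (smult (-r) q) u + pe M (pCons 0 q) u" by (simp only: e pe_add)
  moreover have "pe M (smult (-r) q) u = (-r) *s pe M q u" by (rule pe_smult)
  moreover have "pe M (pCons 0 q) u = M *v pe M q u" by (simp add: pe_pCons)
  ultimately show ?thesis by (simp add: vec_eq_iff)
qed

lemma pe_monom: "pe M (monom c i) u = c *s Mpow M i u"
proof (induction i)
  case 0 then show ?case by (simp add: monom_0 pe_pCons Mpow_def)
next
  case (Suc i) then show ?case
    by (simp add: monom_Suc pe_pCons Mpow_def vector_scalar_commute)
qed

lemma pe_sum: "pe M (\<Sum>i\<in>I. f i) u = (\<Sum>i\<in>I. pe M (f i) u)"
  by (induction I rule: infinite_finite_induct) (auto simp: pe_add)

lemma eig_from_poly: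
  fixes M :: "complex^'n^'n"
  shows "p \<noteq> 0 \<Longrightarrow> u \<noteq> 0 \<Longrightarrow> pe M p u = 0 \<Longrightarrow> \<exists>l w. w \<noteq> 0 \<and> M *v w = l *s w"
proof (induction "degree p" arbitrary: p u rule: less_induct)
  case less
  show ?case
  proof (cases "degree p = 0")
    case True
    have p: "[:coeff p 0:] = p" using True by (rule degree_0_id)
    have pe1: "pe M [:coeff p 0:] u = coeff p 0 *s u" by (simp add: pe_pCons)
    have "pe M p u = coeff p 0 *s u" using pe1 unfolding p .
    moreover have "coeff p 0 \<noteq> 0" using leading_coeff_neq_0[OF less.prems(1)] True by simp
    ultimately show ?thesis using less.prems by simp
  next
    case False
    then have "\<not> constant (poly p)" by (simp add: constant_degree)
    then obtain r where "poly p r = 0" using fundamental_theorem_of_algebra by blast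
    then have "[:-r,1:] dvd p" by (simp add: poly_eq_0_iff_dvd)
    then obtain q where pq: "p = [:-r,1:] * q" by (rule dvdE)
    have q0: "q \<noteq> 0" using less.prems(1) pq by auto
    have "degree p = degree [:-r,1::complex:] + degree q" unfolding pq
      by (rule degree_mult_eq) (simp_all add: q0)
    then have dq: "degree q < degree p" by simp
    show ?thesis
    proof (cases "pe M q u = 0")
      case True
      from less.hyps[OF dq q0 less.prems(2) True] show ?thesis .
    next
      case False
      have "M *v pe M q u - r *s pe M q u = 0" using less.prems(3) by (simp only: pq pe_lin)
      then have "M *v pe M q u = r *s pe M q u" by simp
      then show ?thesis using False by blast
    qed
  qed
qed

lemma vec_card_indep:
  fixes T :: "(complex^'n) set"
  assumes "vec.independent T"
  shows "card T \<le> CARD('n)"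
proof -
  have "card T \<le> vec.dim T" using vec.independent_bound_general[OF assms] by (rule conjunct2)
  also have "\<dots> \<le> vec.dim (UNIV :: (complex^'n) set)" by (rule vec.dim_subset, rule subset_UNIV)
  also have "\<dots> = CARD('n)" unfolding vec.dim_UNIV by (rule card_cart_basis)
  finally show ?thesis .
qed

lemma eig_exists:
  fixes M :: "complex^'n^'n"
  shows "\<exists>l v. v \<noteq> 0 \<and> M *v v = l *s v"
proof -
  obtain a :: 'n where True by blast
  define v0 :: "complex^'n" where "v0 = axis a 1"
  have v0: "v0 \<noteq> 0" by (simp add: v0_def axis_eq_0_iff)
  define K where "K = CARD('n)"
  define f where "f i = Mpow M i v0" for i
  obtain c :: "nat \<Rightarrow> complex" where c: "\<exists>i\<le>K. c i \<noteq> 0" "(\<Sum>i\<le>K. c i *s f i) = 0"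
  proof (cases "inj_on f {..K}")
    case True
    define T where "T = f ` {..K}"
    have cT: "card T = K + 1" using True by (simp add: T_def card_image)
    have "\<not> vec.independent T"
    proof
      assume "vec.independent T"
      then have "card T \<le> K" unfolding K_def by (rule vec_card_indep)
      with cT show False by simp
    qed
    moreover have fT: "finite T" by (simp add: T_def)
    ultimately obtain u where u: "\<exists>v\<in>T. u v \<noteq> 0" "(\<Sum>v\<in>T. u v *s v) = 0"
      using vec.dependent_finite by blast
    have "(\<Sum>i\<le>K. u (f i) *s f i) = (\<Sum>v\<in>T. u v *s v)"
      unfolding T_def using sum.reindex[OF True, of "\<lambda>v. u v *s v"] by simp
    moreover have "\<exists>i\<le>K. u (f i) \<noteq> 0" using u(1) unfolding T_def by blast
    ultimately show ?thesis using that[of "\<lambda>i. u (f i)"] u(2) by simp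
  next
    case False
    then obtain i j where ij: "i \<le> K" "j \<le> K" "i \<noteq> j" "f i = f j" unfolding inj_on_def by auto
    define c where "c k = (if k = i then 1 else if k = j then -1 else (0::complex))" for k
    have "(\<Sum>k\<le>K. c k *s f k) = (\<Sum>k\<in>{i,j}. c k *s f k)"
      by (rule sum.mono_neutral_right) (use ij in \<open>auto simp: c_def\<close>)
    also have "\<dots> = 0" using ij by (simp add: c_def)
    finally have "(\<Sum>k\<le>K. c k *s f k) = 0" .
    moreover have "\<exists>k\<le>K. c k \<noteq> 0" using ij by (auto simp: c_def intro!: exI[of _ i])
    ultimately show ?thesis using that[of c] by blast
  qed
  define p where "p = (\<Sum>i\<le>K. monom (c i) i)"
  have cp: "coeff p i = (if i \<le> K then c i else 0)" for i
    by (simp add: p_def coeff_sum coeff_monom)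
  obtain i0 where i0: "i0 \<le> K" "c i0 \<noteq> 0" using c(1) by blast
  have "coeff p i0 \<noteq> 0" using i0 cp by simp
  then have "p \<noteq> 0" by (rule contrapos_nn) simp
  moreover have "pe M p v0 = 0"
    using c(2) by (simp add: p_def pe_sum pe_monom f_def)
  ultimately show ?thesis using eig_from_poly[OF _ v0] by blast
qed

lemma mv_comp: "(A *v x) $ a = (\<Sum>b\<in>UNIV. A $ a $ b * x $ b)"
  by (simp add: matrix_vector_mult_def)

lemma vm_comp: "(x v* A) $ b = (\<Sum>a\<in>UNIV. x $ a * A $ a $ b)"
  by (simp add: vector_matrix_mult_def mult.commute)

lemma eig_bound:
  fixes M :: "complex^'n^'n"
  assumes v: "v \<noteq> 0" and ev: "M *v v = l *s v"
  shows "cmod l \<le> (\<Sum>a\<in>UNIV. \<Sum>b\<in>UNIV. cmod (M$a$b))"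
proof -
  have "Max (range (\<lambda>b. cmod (v$b))) \<in> range (\<lambda>b. cmod (v$b))" by (intro Max_in) auto
  then obtain a where a: "Max (range (\<lambda>b. cmod (v$b))) = cmod (v$a)" by (rule rangeE)
  have amax: "cmod (v$b) \<le> cmod (v$a)" for b unfolding a[symmetric] by (intro Max_ge) auto
  have apos: "cmod (v$a) > 0"
  proof (rule ccontr)
    assume "\<not> cmod (v$a) > 0"
    then have "cmod (v$b) \<le> 0" for b using amax[of b] by linarith
    then have "\<forall>b. v$b = 0" by simp
    then show False using v by (simp add: vec_eq_iff)
  qed
  have "cmod l * cmod (v$a) = cmod ((M *v v)$a)" using ev by (simp add: norm_mult)
  also have "\<dots> = cmod (\<Sum>b\<in>UNIV. M$a$b * v$b)" by (simp add: mv_comp)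
  also have "\<dots> \<le> (\<Sum>b\<in>UNIV. cmod (M$a$b) * cmod (v$b))" by (rule order_trans[OF norm_sum]) (simp add: norm_mult)
  also have "\<dots> \<le> (\<Sum>b\<in>UNIV. cmod (M$a$b) * cmod (v$a))" by (rule sum_mono) (simp add: amax mult_left_mono)
  also have "\<dots> = (\<Sum>b\<in>UNIV. cmod (M$a$b)) * cmod (v$a)" by (simp add: sum_distrib_right)
  also have "\<dots> \<le> (\<Sum>a\<in>UNIV. \<Sum>b\<in>UNIV. cmod (M$a$b)) * cmod (v$a)"
    by (rule mult_right_mono) (auto intro!: member_le_sum sum_nonneg)
  finally show ?thesis using apos by simp
qed

lemma spec_rad_le:
  fixes M :: "complex^'n^'n"
  assumes "\<And>l v. v \<noteq> 0 \<Longrightarrow> M *v v = l *s v \<Longrightarrow> cmod l \<le> g"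
  shows "spec_rad M \<le> g"
  unfolding spec_rad_def
proof (rule cSup_least)
  show "cmod ` {l. \<exists>v. v \<noteq> 0 \<and> M *v v = l *s v} \<noteq> {}" using eig_exists[of M] by blast
qed (use assms in auto)

lemma spec_rad_ge:
  fixes M :: "complex^'n^'n"
  assumes "v \<noteq> 0" "M *v v = l *s v"
  shows "cmod l \<le> spec_rad M"
  unfolding spec_rad_def
proof (rule cSup_upper)
  show "cmod l \<in> cmod ` {l. \<exists>v. v \<noteq> 0 \<and> M *v v = l *s v}" using assms by blast
  show "bdd_above (cmod ` {l. \<exists>v. v \<noteq> 0 \<and> M *v v = l *s v})"
    unfolding bdd_above_def using eig_bound[of _ M] by blast
qed

lemma specrad_lt1:
  fixes S :: "real^'n^'n" and M :: "complex^'n^'n"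
  assumes mu: "\<And>a. \<mu>$a > 0" "\<And>b. (\<Sum>a\<in>UNIV. \<mu>$a * S$a$b) < \<mu>$b"
    and dom: "\<And>a b. cmod (M$a$b) \<le> S$a$b"
  shows "spec_rad M < 1"
proof -
  define g where "g = Max (range (\<lambda>b. (\<Sum>a\<in>UNIV. \<mu>$a * S$a$b) / \<mu>$b))"
  have g1: "g < 1"
  proof -
    have "g \<in> range (\<lambda>b. (\<Sum>a\<in>UNIV. \<mu>$a * S$a$b) / \<mu>$b)" unfolding g_def by (intro Max_in) auto
    then obtain b where "g = (\<Sum>a\<in>UNIV. \<mu>$a * S$a$b) / \<mu>$b" by auto
    then show ?thesis using mu[of b] by (simp add: divide_less_eq)
  qed
  have gb: "(\<Sum>a\<in>UNIV. \<mu>$a * S$a$b) \<le> g * \<mu>$b" for b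
  proof -
    have "(\<Sum>a\<in>UNIV. \<mu>$a * S$a$b) / \<mu>$b \<le> g" unfolding g_def by (intro Max_ge) auto
    then show ?thesis using mu(1)[of b] by (simp add: divide_le_eq)
  qed
  have "spec_rad M \<le> g"
  proof (rule spec_rad_le)
    fix l v assume v: "v \<noteq> (0::complex^'n)" and ev: "M *v v = l *s v"
    have row: "cmod l * cmod (v$a) \<le> (\<Sum>b\<in>UNIV. S$a$b * cmod (v$b))" for a
    proof -
      have "(\<Sum>b\<in>UNIV. M$a$b * v$b) = l * v$a" using arg_cong[OF ev, of "\<lambda>w. w$a"] by (simp add: mv_comp)
      then have "cmod l * cmod (v$a) = cmod (\<Sum>b\<in>UNIV. M$a$b * v$b)" by (simp add: norm_mult)
      also have "\<dots> \<le> (\<Sum>b\<in>UNIV. cmod (M$a$b) * cmod (v$b))" by (rule order_trans[OF norm_sum]) (simp add: norm_mult)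
      also have "\<dots> \<le> (\<Sum>b\<in>UNIV. S$a$b * cmod (v$b))" by (rule sum_mono) (simp add: dom mult_right_mono)
      finally show ?thesis .
    qed
    define T where "T = (\<Sum>a\<in>UNIV. \<mu>$a * cmod (v$a))"
    have Tpos: "T > 0"
    proof -
      obtain a where "v$a \<noteq> 0" using v by (auto simp: vec_eq_iff)
      then have "\<mu>$a * cmod (v$a) > 0" using mu(1)[of a] by simp
      moreover have "\<mu>$a * cmod (v$a) \<le> T" unfolding T_def
        by (rule member_le_sum) (auto intro: mult_nonneg_nonneg less_imp_le[OF mu(1)])
      ultimately show ?thesis by linarith
    qed
    have "cmod l * T = (\<Sum>a\<in>UNIV. \<mu>$a * (cmod l * cmod (v$a)))" unfolding T_def
      by (simp add: sum_distrib_left algebra_simps)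
    also have "\<dots> \<le> (\<Sum>a\<in>UNIV. \<mu>$a * (\<Sum>b\<in>UNIV. S$a$b * cmod (v$b)))"
      by (rule sum_mono) (simp add: row mult_left_mono less_imp_le[OF mu(1)])
    also have "\<dots> = (\<Sum>a\<in>UNIV. \<Sum>b\<in>UNIV. \<mu>$a * (S$a$b * cmod (v$b)))"
      by (simp add: sum_distrib_left)
    also have "\<dots> = (\<Sum>b\<in>UNIV. \<Sum>a\<in>UNIV. \<mu>$a * (S$a$b * cmod (v$b)))"
      by (rule sum.swap)
    also have "\<dots> = (\<Sum>b\<in>UNIV. (\<Sum>a\<in>UNIV. \<mu>$a * S$a$b) * cmod (v$b))"
      by (intro sum.cong refl) (simp add: sum_distrib_left sum_distrib_right mult_ac)
    also have "\<dots> \<le> (\<Sum>b\<in>UNIV. g * \<mu>$b * cmod (v$b))"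
      by (rule sum_mono) (simp add: gb mult_right_mono)
    also have "\<dots> = g * T" unfolding T_def by (simp add: sum_distrib_left algebra_simps)
    finally show "cmod l \<le> g" using Tpos by simp
  qed
  then show ?thesis using g1 by simp
qed

lemma sum_delta_mult:
  fixes f :: "'b::finite \<Rightarrow> 'a::comm_semiring_1"
  shows "(\<Sum>c\<in>UNIV. f c * (if c = b then 1 else 0)) = f b"
proof -
  have "(\<Sum>c\<in>UNIV. f c * (if c = b then 1 else 0)) = (\<Sum>c\<in>UNIV. if c = b then f c else 0)"
    by (rule sum.cong) auto
  also have "\<dots> = f b" by simp
  finally show ?thesis .
qed

lemma pf_brouwer:
  fixes S :: "real^'n^'n"
  assumes nn: "\<And>a b. S$a$b \<ge> 0"
    and v: "\<And>a. v$a \<ge> 0" "v \<noteq> 0" "\<And>a. v$a \<le> (\<Sum>b\<in>UNIV. S$a$b * v$b)"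
  shows "\<exists>x d. x \<noteq> 0 \<and> d \<ge> 1 \<and> (\<forall>a. (\<Sum>b\<in>UNIV. S$a$b * x$b) = d * x$a)"
proof -
  define Sx where "Sx x = (\<chi> a. \<Sum>b\<in>UNIV. S$a$b * x$b)" for x :: "real^'n"
  define K where "K = {x::real^'n. (\<forall>a. 0 \<le> x$a) \<and> (\<Sum>a\<in>UNIV. x$a) = 1 \<and> (\<forall>a. x$a \<le> Sx x $ a)}"
  have Sx_mono: "Sx x $ a \<le> Sx y $ a" if "\<forall>a. x$a \<le> y$a" for x y a
    unfolding Sx_def using that by (auto intro!: sum_mono mult_left_mono nn)
  have Sx_nn: "0 \<le> Sx x $ a" if "\<forall>a. 0 \<le> x$a" for x a
    unfolding Sx_def using that by (auto intro!: sum_nonneg simp: nn)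
  have Sx_lin: "Sx (u *\<^sub>R x + w *\<^sub>R y) = u *\<^sub>R Sx x + w *\<^sub>R Sx y" for u w x y
    by (simp add: Sx_def vec_eq_iff sum.distrib sum_distrib_left algebra_simps)
  have Sx_scale: "Sx (u *\<^sub>R x) = u *\<^sub>R Sx x" for u x
    by (simp add: Sx_def vec_eq_iff sum_distrib_left algebra_simps)
  have contSx: "continuous_on A Sx" for A unfolding Sx_def by (intro continuous_intros)
  have closedK: "closed K" unfolding K_def
    by (intro closed_Collect_conj closed_Collect_all closed_Collect_le closed_Collect_eq
        continuous_intros continuous_on_component[OF contSx])
  have "K \<subseteq> cball 0 1"
  proof
    fix x assume "x \<in> K"
    then have "norm x \<le> (\<Sum>a\<in>UNIV. \<bar>x$a\<bar>)" "(\<Sum>a\<in>UNIV. \<bar>x$a\<bar>) = 1" using norm_le_l1_cart[of x]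
      by (auto simp: K_def)
    then show "x \<in> cball 0 1" by simp
  qed
  then have compK: "compact K" using closedK compact_eq_bounded_closed bounded_subset bounded_cball by blast
  have convK: "convex K" unfolding convex_def
  proof (intro ballI allI impI)
    fix x y and u w :: real assume xy: "x \<in> K" "y \<in> K" and uw: "0 \<le> u" "0 \<le> w" "u + w = 1"
    have "(\<Sum>a\<in>UNIV. (u *\<^sub>R x + w *\<^sub>R y)$a) = u * (\<Sum>a\<in>UNIV. x$a) + w * (\<Sum>a\<in>UNIV. y$a)"
      by (simp add: sum.distrib sum_distrib_left)
    also have "\<dots> = 1" using xy uw by (simp add: K_def)
    finally have s1: "(\<Sum>a\<in>UNIV. (u *\<^sub>R x + w *\<^sub>R y)$a) = 1" .
    have "(u *\<^sub>R x + w *\<^sub>R y)$a \<le> Sx (u *\<^sub>R x + w *\<^sub>R y) $ a" for a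
      using xy uw unfolding Sx_lin K_def
      by (auto intro!: add_mono mult_left_mono)
    moreover have "0 \<le> (u *\<^sub>R x + w *\<^sub>R y)$a" for a using xy uw by (auto simp: K_def)
    ultimately show "u *\<^sub>R x + w *\<^sub>R y \<in> K" using s1 by (auto simp: K_def)
  qed
  define den where "den x = (\<Sum>a\<in>UNIV. Sx x $ a)" for x
  define f where "f x = (1 / den x) *\<^sub>R Sx x" for x
  have den1: "den x \<ge> 1" if "x \<in> K" for x
  proof -
    have "(\<Sum>a\<in>UNIV. x$a) \<le> den x" unfolding den_def by (rule sum_mono) (use that in \<open>auto simp: K_def\<close>)
    then show ?thesis using that by (simp add: K_def)
  qed
  have contf: "continuous_on K f" unfolding f_def den_def
    by (intro continuous_intros continuous_on_component[OF contSx] contSx) (use den1 den_def in force)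
  have fK: "f \<in> K \<rightarrow> K"
  proof
    fix x assume x: "x \<in> K"
    have d: "den x \<ge> 1" using den1 x .
    have xnn: "\<forall>a. 0 \<le> x$a" using x by (simp add: K_def)
    have "0 \<le> f x $ a" for a using d Sx_nn[OF xnn] by (simp add: f_def)
    moreover have "(\<Sum>a\<in>UNIV. f x $ a) = 1" using d
      by (simp add: f_def sum_divide_distrib[symmetric] den_def)
    moreover have "f x $ a \<le> Sx (f x) $ a" for a
    proof -
      have "Sx x $ a \<le> Sx (Sx x) $ a" using x by (intro Sx_mono) (simp add: K_def)
      then show ?thesis using d by (simp add: f_def Sx_scale divide_right_mono)
    qed
    ultimately show "f x \<in> K" by (simp add: K_def)
  qed
  have sv: "(\<Sum>a\<in>UNIV. v$a) > 0"
  proof -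
    obtain a where "v$a \<noteq> 0" using v(2) by (auto simp: vec_eq_iff)
    then have "v$a > 0" using v(1)[of a] by simp
    moreover have "v$a \<le> (\<Sum>a\<in>UNIV. v$a)" by (rule member_le_sum) (auto simp: v(1))
    ultimately show ?thesis by simp
  qed
  define x0 where "x0 = (1 / (\<Sum>a\<in>UNIV. v$a)) *\<^sub>R v"
  have "x0 \<in> K"
  proof -
    have "v$a \<le> Sx v $ a" for a using v(3) by (simp add: Sx_def)
    then show ?thesis using sv v(1)
      by (auto simp: K_def x0_def Sx_scale sum_divide_distrib[symmetric] divide_right_mono)
  qed
  then have Kne: "K \<noteq> {}" by blast
  obtain x where xK: "x \<in> K" and fx: "f x = x" using brouwer[OF compK convK Kne contf fK] by blast
  have d: "den x \<ge> 1" using den1 xK .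
  have "Sx x = den x *\<^sub>R x" using fx d by (simp add: f_def vec_eq_iff field_simps)
  then have eq: "(\<Sum>b\<in>UNIV. S$a$b * x$b) = den x * x$a" for a
    by (simp add: Sx_def vec_eq_iff)
  have "x \<noteq> 0" using xK by (auto simp: K_def)
  then show ?thesis using d eq by blast
qed

lemma pf_specrad:
  fixes S :: "real^'n^'n"
  assumes nn: "\<And>a b. S$a$b \<ge> 0"
    and v: "\<And>a. v$a \<ge> 0" "v \<noteq> 0" "\<And>a. v$a \<le> (\<Sum>b\<in>UNIV. S$a$b * v$b)"
  shows "1 \<le> spec_rad (cmat S)"
proof -
  obtain x d where x: "x \<noteq> 0" "d \<ge> 1" "\<And>a. (\<Sum>b\<in>UNIV. S$a$b * x$b) = d * x$a"
    using pf_brouwer[OF nn v] by blast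
  define y where "y = (\<chi> a. complex_of_real (x$a))"
  have "cmat S *v y = complex_of_real d *s y"
  proof -
    have "(cmat S *v y) $ a = (complex_of_real d *s y) $ a" for a
    proof -
      have "(cmat S *v y) $ a = complex_of_real (\<Sum>b\<in>UNIV. S$a$b * x$b)"
        by (simp add: mv_comp cmat_def y_def)
      then show ?thesis using x(3)[of a] by (simp add: y_def)
    qed
    then show ?thesis by (simp add: vec_eq_iff)
  qed
  moreover have "y \<noteq> 0" using x(1) by (auto simp: y_def vec_eq_iff)
  ultimately have "cmod (complex_of_real d) \<le> spec_rad (cmat S)" by (rule spec_rad_ge[rotated])
  then show ?thesis using x(2) by simp
qed

lemma ville:
  fixes S :: "real^'m^'m"
  assumes no: "\<not> (\<exists>v. (\<forall>a. 0 \<le> v$a) \<and> v \<noteq> 0 \<and> (\<forall>a. v$a \<le> (\<Sum>b\<in>UNIV. S$a$b * v$b)))"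
  shows "\<exists>\<mu>. (\<forall>a. 0 < \<mu>$a) \<and> (\<forall>b. (\<Sum>a\<in>UNIV. \<mu>$a * S$a$b) < \<mu>$b)"
proof -
  define L where "L v = (\<chi> a. v$a - (\<Sum>b\<in>UNIV. S$a$b * v$b))" for v :: "real^'m"
  define D where "D = {v::real^'m. (\<forall>a. 0 \<le> v$a) \<and> (\<Sum>a\<in>UNIV. v$a) = 1}"
  define Ow where "Ow = {w::real^'m. \<forall>a. 0 \<le> w$a}"
  define C where "C = (\<Union>x\<in>Ow. \<Union>y\<in>L ` D. {x + y})"
  have linL: "linear L"
    by (rule linearI) (simp_all add: L_def vec_eq_iff sum.distrib sum_distrib_left algebra_simps)
  have closedD: "closed D" unfolding D_def
    by (intro closed_Collect_conj closed_Collect_all closed_Collect_le closed_Collect_eq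
        continuous_intros)
  have "D \<subseteq> cball 0 1"
  proof
    fix x assume "x \<in> D"
    then have "norm x \<le> (\<Sum>a\<in>UNIV. \<bar>x$a\<bar>)" "(\<Sum>a\<in>UNIV. \<bar>x$a\<bar>) = 1" using norm_le_l1_cart[of x]
      by (auto simp: D_def)
    then show "x \<in> cball 0 1" by simp
  qed
  then have compD: "compact D" using closedD compact_eq_bounded_closed bounded_subset bounded_cball by blast
  have convD: "convex D" unfolding convex_def
  proof (intro ballI allI impI)
    fix x y and u w :: real assume xy: "x \<in> D" "y \<in> D" and uw: "0 \<le> u" "0 \<le> w" "u + w = 1"
    have "(\<Sum>a\<in>UNIV. (u *\<^sub>R x + w *\<^sub>R y)$a) = u * (\<Sum>a\<in>UNIV. x$a) + w * (\<Sum>a\<in>UNIV. y$a)"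
      by (simp add: sum.distrib sum_distrib_left)
    then show "u *\<^sub>R x + w *\<^sub>R y \<in> D" using xy uw by (auto simp: D_def)
  qed
  have convOw: "convex Ow" unfolding convex_def Ow_def by auto
  have closedOw: "closed Ow" unfolding Ow_def by (rule closed_positive_orthant)
  have compLD: "compact (L ` D)"
    by (rule compact_continuous_image[OF _ compD]) (unfold L_def, intro continuous_intros)
  have closedC: "closed C" unfolding C_def by (rule closed_compact_sums[OF closedOw compLD])
  have convC: "convex C" unfolding C_def by (rule convex_sums[OF convOw convex_linear_image[OF linL convD]])
  have "0 \<notin> C"
  proof
    assume "0 \<in> C"
    then obtain w v where w: "w \<in> Ow" and vD: "v \<in> D" and e: "0 = w + L v" unfolding C_def by auto
    have "v$a \<le> (\<Sum>b\<in>UNIV. S$a$b * v$b)" for a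
    proof -
      have "0 = w$a + (v$a - (\<Sum>b\<in>UNIV. S$a$b * v$b))" using e by (simp add: vec_eq_iff L_def)
      moreover have "0 \<le> w$a" using w by (simp add: Ow_def)
      ultimately show ?thesis by linarith
    qed
    moreover have "v \<noteq> 0" using vD by (auto simp: D_def)
    ultimately show False using no vD by (auto simp: D_def)
  qed
  then obtain \<mu> b0 where b0: "0 < b0" and sep: "\<And>c. c \<in> C \<Longrightarrow> b0 < \<mu> \<bullet> c"
    using separating_hyperplane_closed_0[OF convC closedC] by blast
  have key: "b0 < (\<Sum>a\<in>UNIV. \<mu>$a * (w$a + L v $ a))" if "w \<in> Ow" "v \<in> D" for w v
  proof -
    have "w + L v \<in> C" using that unfolding C_def by blast
    from sep[OF this] show ?thesis by (simp add: inner_vec_def)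
  qed
  have axD: "axis a 1 \<in> D" for a
    by (auto simp: D_def axis_def)
  have Lax: "(\<Sum>a\<in>UNIV. \<mu>$a * L (axis b 1) $ a) = \<mu>$b - (\<Sum>a\<in>UNIV. \<mu>$a * S$a$b)" for b
  proof -
    have La: "L (axis b 1) $ a = (if a = b then 1 else 0) - S$a$b" for a
      by (simp add: L_def axis_def sum_delta_mult)
    have d: "(\<lambda>a. \<mu>$a * (if a = b then 1 else 0)) = (\<lambda>a. if a = b then \<mu>$a else 0)" by auto
    have "(\<Sum>a\<in>UNIV. \<mu>$a * L (axis b 1) $ a) = (\<Sum>a\<in>UNIV. \<mu>$a * (if a = b then 1 else 0)) - (\<Sum>a\<in>UNIV. \<mu>$a * S$a$b)"
      by (simp only: La right_diff_distrib sum_subtractf)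
    also have "(\<Sum>a\<in>UNIV. \<mu>$a * (if a = b then 1 else 0)) = \<mu>$b" by (simp only: d sum.delta) simp
    finally show ?thesis .
  qed
  have mu_nn: "0 \<le> \<mu>$a" for a
  proof (rule ccontr)
    assume neg: "\<not> 0 \<le> \<mu>$a"
    define r where "r = \<mu> \<bullet> L (axis a 1)"
    define t where "t = (\<bar>r\<bar> + b0 + 1) / (- \<mu>$a)"
    have t: "t \<ge> 0" unfolding t_def by (rule divide_nonneg_pos) (use neg b0 in auto)
    have "t *\<^sub>R axis a 1 \<in> Ow" using t by (auto simp: Ow_def axis_def)
    then have "t *\<^sub>R axis a 1 + L (axis a 1) \<in> C" using axD[of a] unfolding C_def by blast
    from sep[OF this]
    have "b0 < t * \<mu>$a + r"
      by (simp add: r_def inner_add_right inner_axis)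
    moreover have "t * \<mu>$a = - (\<bar>r\<bar> + b0 + 1)" using neg by (simp add: t_def)
    ultimately show False using abs_ge_self[of r] b0 by linarith
  qed
  have gap: "b0 < \<mu>$b - (\<Sum>a\<in>UNIV. \<mu>$a * S$a$b)" for b
  proof -
    have "0 \<in> Ow" by (simp add: Ow_def)
    from key[OF this axD[of b]] show ?thesis using Lax[of b] by simp
  qed
  define K0 where "K0 = (\<Sum>a\<in>UNIV. \<Sum>b\<in>UNIV. \<bar>S$a$b\<bar>) + 1"
  have K0: "K0 \<ge> 1" unfolding K0_def by (simp add: sum_nonneg)
  define e where "e = b0 / (2 * K0)"
  have e: "e > 0" using b0 K0 by (simp add: e_def)
  define \<mu>' where "\<mu>' = (\<chi> a. \<mu>$a + e)"
  show ?thesis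
  proof (intro exI[of _ \<mu>'] conjI allI)
    fix a show "0 < \<mu>'$a" using mu_nn[of a] e by (simp add: \<mu>'_def)
  next
    fix b
    have cs: "\<bar>\<Sum>a\<in>UNIV. S$a$b\<bar> \<le> K0 - 1"
    proof -
      have "\<bar>\<Sum>a\<in>UNIV. S$a$b\<bar> \<le> (\<Sum>a\<in>UNIV. \<bar>S$a$b\<bar>)" by (rule sum_abs)
      also have "\<dots> \<le> (\<Sum>a\<in>UNIV. \<Sum>b\<in>UNIV. \<bar>S$a$b\<bar>)"
        by (rule sum_mono) (rule member_le_sum, auto)
      finally show ?thesis by (simp add: K0_def)
    qed
    have "e * (\<Sum>a\<in>UNIV. S$a$b) \<le> e * (K0 - 1)" using cs e by (intro mult_left_mono) auto
    moreover have "e * K0 = b0 / 2" using K0 by (simp add: e_def)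
    moreover have "(\<Sum>a\<in>UNIV. \<mu>'$a * S$a$b) = (\<Sum>a\<in>UNIV. \<mu>$a * S$a$b) + e * (\<Sum>a\<in>UNIV. S$a$b)"
      by (simp add: \<mu>'_def distrib_right sum.distrib sum_distrib_left)
    ultimately show "(\<Sum>a\<in>UNIV. \<mu>'$a * S$a$b) < \<mu>'$b" using gap[of b] e b0
      by (simp add: \<mu>'_def algebra_simps)
  qed
qed

lemma left_to_right:
  fixes S :: "real^'m^'m"
  assumes nn: "\<And>a b. S$a$b \<ge> 0" and mu: "\<And>a. \<mu>$a > 0" "\<And>b. (\<Sum>a\<in>UNIV. \<mu>$a * S$a$b) < \<mu>$b"
  shows "\<exists>\<nu>. (\<forall>a. 0 < \<nu>$a) \<and> (\<forall>a. (\<Sum>b\<in>UNIV. S$a$b * \<nu>$b) < \<nu>$a)"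
proof -
  have no: "\<not> (\<exists>v. (\<forall>a. 0 \<le> v$a) \<and> v \<noteq> 0 \<and> (\<forall>a. v$a \<le> (\<Sum>b\<in>UNIV. (transpose S)$a$b * v$b)))"
  proof
    assume "\<exists>v. (\<forall>a. 0 \<le> v$a) \<and> v \<noteq> 0 \<and> (\<forall>a. v$a \<le> (\<Sum>b\<in>UNIV. (transpose S)$a$b * v$b))"
    then obtain v where v: "\<And>a. 0 \<le> v$a" "v \<noteq> 0" "\<And>a. v$a \<le> (\<Sum>b\<in>UNIV. S$b$a * v$b)"
      by (auto simp: transpose_def)
    define c where "c = Max (range (\<lambda>a. v$a / \<mu>$a))"
    have "c \<in> range (\<lambda>a. v$a / \<mu>$a)" unfolding c_def by (intro Max_in) auto
    then obtain a0 where a0: "c = v$a0 / \<mu>$a0" by auto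
    have cge: "v$a / \<mu>$a \<le> c" for a unfolding c_def by (intro Max_ge) auto
    have vle: "v$a \<le> c * \<mu>$a" for a using cge[of a] mu(1)[of a] by (simp add: divide_le_eq)
    have cpos: "c > 0"
    proof -
      obtain a where "v$a \<noteq> 0" using v(2) by (auto simp: vec_eq_iff)
      then have "v$a / \<mu>$a > 0" using v(1)[of a] mu(1)[of a] by simp
      then show ?thesis using cge[of a] by simp
    qed
    have "v$a0 \<le> (\<Sum>b\<in>UNIV. S$b$a0 * v$b)" by (rule v(3))
    also have "\<dots> \<le> (\<Sum>b\<in>UNIV. S$b$a0 * (c * \<mu>$b))" by (intro sum_mono mult_left_mono vle nn)
    also have "\<dots> = c * (\<Sum>b\<in>UNIV. \<mu>$b * S$b$a0)" by (simp add: sum_distrib_left algebra_simps)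
    also have "\<dots> < c * \<mu>$a0" using cpos mu(2)[of a0] by simp
    finally show False using a0 mu(1)[of a0] by simp
  qed
  from ville[OF no] obtain \<nu> where nu: "\<And>a. 0 < \<nu>$a" "\<And>b. (\<Sum>a\<in>UNIV. \<nu>$a * transpose S$a$b) < \<nu>$b"
    by blast
  show ?thesis
    using nu by (intro exI[of _ \<nu>]) (auto simp: transpose_def mult.commute)
qed

lemma S_comp: "(\<Sum>i\<in>UNIV. A i :: real^'n^'n) $ a $ b = (\<Sum>i\<in>UNIV. A i $ a $ b)"
  by (simp add: sum_component)

lemma maxd:
  fixes h :: "'k::finite \<Rightarrow> real"
  shows "h i \<le> max_delay h"
  unfolding max_delay_def by (rule Max_ge) auto

lemma stab_suff:
  fixes A :: "'k::finite \<Rightarrow> real^'n^'n" and h :: "'k \<Rightarrow> real"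
  assumes nonneg: "\<And>i a b. A i $ a $ b \<ge> 0"
    and delays: "\<And>i. h i > 0"
    and nu: "\<And>a. \<nu>$a > 0" "\<And>a. (\<Sum>b\<in>UNIV. (\<Sum>i\<in>UNIV. A i) $ a $ b * \<nu>$b) < \<nu>$a"
  shows "dde_asymp_stable A h"
proof -
  define S where "S = (\<Sum>i\<in>UNIV. A i)"
  have Sc: "S $ a $ b = (\<Sum>i\<in>UNIV. A i $ a $ b)" for a b unfolding S_def by (rule S_comp)
  have Snn: "S $ a $ b \<ge> 0" for a b unfolding Sc by (auto intro!: sum_nonneg nonneg)
  define H where "H = max_delay h"
  obtain i0 :: 'k where True by blast
  obtain a0 :: 'n where True by blast
  have hH: "h i \<le> H" for i unfolding H_def by (rule maxd)
  have Hpos: "H > 0" using hH[of i0] delays[of i0] by linarith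
  define hm where "hm = Min (range h)"
  have hm_le: "hm \<le> h i" for i unfolding hm_def by (rule Min_le) auto
  have hm_pos: "hm > 0"
  proof -
    have "hm \<in> range h" unfolding hm_def by (intro Min_in) auto
    then show ?thesis using delays by auto
  qed
  define g where "g = Max (range (\<lambda>a. (\<Sum>b\<in>UNIV. S$a$b * \<nu>$b) / \<nu>$a))"
  have g1: "g < 1"
  proof -
    have "g \<in> range (\<lambda>a. (\<Sum>b\<in>UNIV. S$a$b * \<nu>$b) / \<nu>$a)" unfolding g_def by (intro Max_in) auto
    then obtain a where "g = (\<Sum>b\<in>UNIV. S$a$b * \<nu>$b) / \<nu>$a" by auto
    then show ?thesis using nu[of a] by (simp add: divide_less_eq S_def)
  qed
  have ga: "(\<Sum>b\<in>UNIV. S$a$b * \<nu>$b) \<le> g * \<nu>$a" for a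
  proof -
    have "(\<Sum>b\<in>UNIV. S$a$b * \<nu>$b) / \<nu>$a \<le> g" unfolding g_def by (intro Max_ge) auto
    then show ?thesis using nu(1)[of a] by (simp add: divide_le_eq)
  qed
  have g0: "g \<ge> 0"
  proof -
    have "0 \<le> (\<Sum>b\<in>UNIV. S$a0$b * \<nu>$b)"
      by (intro sum_nonneg mult_nonneg_nonneg Snn) (simp add: less_imp_le nu(1))
    then have "0 \<le> (\<Sum>b\<in>UNIV. S$a0$b * \<nu>$b) / \<nu>$a0" using nu(1)[of a0] by simp
    also have "\<dots> \<le> g" unfolding g_def by (intro Max_ge) auto
    finally show ?thesis .
  qed
  define m where "m t = nat \<lfloor>t / H\<rfloor>" for t
  define B where "B c t = (if t < 0 then c else c * g ^ Suc (m t))" for c t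
  have est: "\<bar>x t $ a\<bar> \<le> B c t * \<nu>$a"
    if sol: "dde_solution A h x" and c0: "c \<ge> 0"
      and init: "\<And>s a. s \<in> {-H..<0} \<Longrightarrow> \<bar>x s $ a\<bar> \<le> c * \<nu>$a"
      and t: "t \<ge> -H" for x c t a
  proof -
    have ind: "\<forall>t a. -H \<le> t \<and> t < -H + real n * hm \<longrightarrow> \<bar>x t $ a\<bar> \<le> B c t * \<nu>$a" for n
    proof (induction n)
      case 0 then show ?case by auto
    next
      case (Suc n)
      show ?case
      proof (intro allI impI)
        fix t a assume ta: "-H \<le> t \<and> t < -H + real (Suc n) * hm"
        show "\<bar>x t $ a\<bar> \<le> B c t * \<nu>$a"
        proof (cases "t < 0")
          case True
          then show ?thesis using init[of t a] ta by (simp add: B_def)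
        next
          case False
          have prev: "\<bar>x (t - h i) $ b\<bar> \<le> c * g ^ m t * \<nu>$b" for i b
          proof -
            have r: "-H \<le> t - h i \<and> t - h i < -H + real n * hm"
              using ta hH[of i] hm_le[of i] False by (auto simp: algebra_simps)
            have bb: "B c (t - h i) \<le> c * g ^ m t"
            proof (cases "t - h i < 0")
              case True
              have "t / H < 1" using True hH[of i] Hpos by (simp add: divide_less_eq)
              then have "m t = 0" unfolding m_def using False Hpos by (simp add: floor_less_iff)
              then show ?thesis using True by (simp add: B_def)
            next
              case False2: False
              have "t / H \<le> (t - h i) / H + 1" using hH[of i] Hpos by (simp add: field_simps)
              then have "\<lfloor>t / H\<rfloor> \<le> \<lfloor>(t - h i) / H + 1\<rfloor>" by (rule floor_mono)
              then have "\<lfloor>t / H\<rfloor> \<le> \<lfloor>(t - h i) / H\<rfloor> + 1" by simp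
              then have "m t \<le> Suc (m (t - h i))" unfolding m_def using False2 Hpos
                by (simp add: nat_le_iff)
              then have "g ^ Suc (m (t - h i)) \<le> g ^ m t"
                using g0 g1 by (intro power_decreasing) auto
              then show ?thesis using False2 c0 by (simp add: B_def mult_left_mono)
            qed
            have "\<bar>x (t - h i) $ b\<bar> \<le> B c (t - h i) * \<nu>$b" using Suc.IH r by blast
            also have "\<dots> \<le> c * g ^ m t * \<nu>$b" using bb nu(1)[of b] by (simp add: mult_right_mono)
            finally show ?thesis .
          qed
          have "x t $ a = (\<Sum>i\<in>UNIV. (A i *v x (t - h i)) $ a)"
            using sol False unfolding dde_solution_def by (simp add: sum_component)
          also have "\<dots> = (\<Sum>i\<in>UNIV. \<Sum>b\<in>UNIV. A i $ a $ b * x (t - h i) $ b)" by (simp add: mv_comp)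
          finally have xe: "x t $ a = (\<Sum>i\<in>UNIV. \<Sum>b\<in>UNIV. A i $ a $ b * x (t - h i) $ b)" .
          have "\<bar>x t $ a\<bar> \<le> (\<Sum>i\<in>UNIV. \<bar>\<Sum>b\<in>UNIV. A i $ a $ b * x (t - h i) $ b\<bar>)"
            unfolding xe by (rule sum_abs)
          also have "\<dots> \<le> (\<Sum>i\<in>UNIV. \<Sum>b\<in>UNIV. \<bar>A i $ a $ b * x (t - h i) $ b\<bar>)"
            by (intro sum_mono sum_abs)
          also have "\<dots> \<le> (\<Sum>i\<in>UNIV. \<Sum>b\<in>UNIV. A i $ a $ b * (c * g ^ m t * \<nu>$b))"
            by (intro sum_mono) (simp add: abs_mult nonneg prev mult_left_mono)
          also have "\<dots> = (\<Sum>b\<in>UNIV. \<Sum>i\<in>UNIV. A i $ a $ b * (c * g ^ m t * \<nu>$b))"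
            by (rule sum.swap)
          also have "\<dots> = c * g ^ m t * (\<Sum>b\<in>UNIV. S$a$b * \<nu>$b)"
            by (simp add: Sc sum_distrib_left sum_distrib_right mult_ac)
          also have "\<dots> \<le> c * g ^ m t * (g * \<nu>$a)"
            using ga[of a] c0 g0 by (intro mult_left_mono) auto
          also have "\<dots> = B c t * \<nu>$a" using False by (simp add: B_def)
          finally show ?thesis .
        qed
      qed
    qed
    obtain n :: nat where "(t + H) / hm < n" using reals_Archimedean2 by blast
    then have "t < -H + real n * hm" using hm_pos by (simp add: divide_less_eq algebra_simps)
    then show ?thesis using ind[of n] t by blast
  qed
  define nmin where "nmin = Min (range (\<lambda>a. \<nu>$a))"
  have nmin_pos: "nmin > 0"
  proof -
    have "nmin \<in> range (\<lambda>a. \<nu>$a)" unfolding nmin_def by (intro Min_in) auto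
    then show ?thesis using nu(1) by auto
  qed
  have nmin_le: "nmin \<le> \<nu>$a" for a unfolding nmin_def by (rule Min_le) auto
  define sn where "sn = (\<Sum>a\<in>UNIV. \<nu>$a)"
  have sn_pos: "sn > 0" unfolding sn_def by (rule sum_pos) (auto simp: nu(1))
  have init_from_norm: "\<bar>x s $ a\<bar> \<le> (d / nmin) * \<nu>$a" if "norm (x s) \<le> d" for x s a d
  proof -
    have "\<bar>x s $ a\<bar> \<le> d" using component_le_norm_cart[of "x s" a] that by linarith
    also have "d \<le> (d / nmin) * \<nu>$a"
    proof -
      have d0: "d \<ge> 0" using that norm_ge_zero order_trans by blast
      have "d / nmin * nmin \<le> d / nmin * \<nu>$a" using nmin_le[of a] d0 nmin_pos by (intro mult_left_mono) auto
      then show ?thesis using nmin_pos by simp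
    qed
    finally show ?thesis .
  qed
  have norm_bound: "norm (x t) \<le> c * g ^ Suc (m t) * sn"
    if sol: "dde_solution A h x" and c0: "c \<ge> 0"
      and init: "\<And>s a. s \<in> {-H..<0} \<Longrightarrow> \<bar>x s $ a\<bar> \<le> c * \<nu>$a" and t0: "t \<ge> 0" for x c t
  proof -
    have "norm (x t) \<le> (\<Sum>a\<in>UNIV. \<bar>x t $ a\<bar>)" by (rule norm_le_l1_cart)
    also have "\<dots> \<le> (\<Sum>a\<in>UNIV. B c t * \<nu>$a)"
      by (rule sum_mono) (rule est[OF sol c0 init], use t0 Hpos in auto)
    also have "\<dots> = c * g ^ Suc (m t) * sn" using t0 by (simp add: B_def sn_def sum_distrib_left)
    finally show ?thesis .
  qed
  show ?thesis
    unfolding dde_asymp_stable_def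
  proof (intro conjI allI impI)
    fix e :: real assume e: "e > 0"
    define d where "d = e * nmin / sn"
    have d: "d > 0" using e nmin_pos sn_pos by (simp add: d_def)
    show "\<exists>\<delta>>0. \<forall>x. dde_solution A h x \<and> (\<forall>t\<in>{- max_delay h..<0}. norm (x t) \<le> \<delta>) \<longrightarrow> (\<forall>t\<ge>0. norm (x t) \<le> e)"
    proof (intro exI[of _ d] conjI d allI impI)
      fix x t assume xa: "dde_solution A h x \<and> (\<forall>t\<in>{- max_delay h..<0}. norm (x t) \<le> d)" and t0: "(0::real) \<le> t"
      have init: "\<bar>x s $ a\<bar> \<le> (d / nmin) * \<nu>$a" if "s \<in> {-H..<0}" for s a
        by (rule init_from_norm) (use xa that in \<open>auto simp: H_def\<close>)
      have c0: "d / nmin \<ge> 0" using d nmin_pos by simp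
      have "norm (x t) \<le> d / nmin * g ^ Suc (m t) * sn"
        by (rule norm_bound) (use xa c0 init t0 in auto)
      also have "\<dots> \<le> d / nmin * 1 * sn"
        using g0 g1 c0 sn_pos by (intro mult_right_mono mult_left_mono power_le_one) auto
      also have "\<dots> = e" using nmin_pos sn_pos by (simp add: d_def)
      finally show "norm (x t) \<le> e" .
    qed
  next
    fix x assume xa: "dde_solution A h x \<and> bounded (x ` {- max_delay h..<0})"
    obtain Bd where Bd: "\<And>s. s \<in> {-H..<0} \<Longrightarrow> norm (x s) \<le> Bd"
      using xa unfolding bounded_iff H_def by blast
    define Bd' where "Bd' = max Bd 0"
    have init: "\<bar>x s $ a\<bar> \<le> (Bd' / nmin) * \<nu>$a" if "s \<in> {-H..<0}" for s a
      using init_from_norm[of x s Bd'] Bd[OF that] by (simp add: Bd'_def)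
    have c0: "Bd' / nmin \<ge> 0" using nmin_pos by (simp add: Bd'_def)
    define C where "C = Bd' / nmin * sn"
    have C0: "C \<ge> 0" unfolding C_def using c0 sn_pos by (intro mult_nonneg_nonneg) auto
    have nb: "norm (x t) \<le> C * g ^ Suc (m t)" if "t \<ge> 0" for t
    proof -
      have "norm (x t) \<le> Bd' / nmin * g ^ Suc (m t) * sn"
        by (rule norm_bound) (use xa c0 init that in auto)
      then show ?thesis by (simp add: C_def algebra_simps)
    qed
    show "(x \<longlongrightarrow> 0) at_top"
    proof (rule tendstoI)
      fix e :: real assume e: "e > 0"
      have "(\<lambda>n. C * g ^ n) \<longlonglongrightarrow> 0"
        by (intro tendsto_mult_right_zero LIMSEQ_power_zero) (use g0 g1 in auto)
      then have "\<forall>\<^sub>F n in sequentially. C * g ^ n < e" using e by (rule order_tendstoD)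
      then obtain N where N: "\<And>n. n \<ge> N \<Longrightarrow> C * g ^ n < e" unfolding eventually_sequentially by blast
      show "\<forall>\<^sub>F t in at_top. dist (x t) 0 < e"
        unfolding eventually_at_top_linorder
      proof (intro exI[of _ "real N * H"] allI impI)
        fix t assume t: "t \<ge> real N * H"
        have "0 \<le> real N * H" using Hpos by simp
        then have t0: "t \<ge> 0" using t by linarith
        have "real N \<le> t / H" using t Hpos by (simp add: le_divide_eq)
        then have "N \<le> m t" unfolding m_def by (simp add: le_nat_floor)
        then have "g ^ Suc (m t) \<le> g ^ N" using g0 g1 by (intro power_decreasing) auto
        then have "C * g ^ Suc (m t) \<le> C * g ^ N" using C0 by (rule mult_left_mono)
        then show "dist (x t) 0 < e" using nb[OF t0] N[of N] by simp
      qed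
    qed
  qed
qed

fun itr :: "('k::finite \<Rightarrow> real^'n^'n) \<Rightarrow> ('k \<Rightarrow> real) \<Rightarrow> real^'n \<Rightarrow> nat \<Rightarrow> real \<Rightarrow> real^'n" where
  "itr A h v 0 t = v"
| "itr A h v (Suc m) t = (if t < 0 then v else (\<Sum>i\<in>UNIV. A i *v itr A h v m (t - h i)))"

lemma unstable:
  fixes A :: "'k::finite \<Rightarrow> real^'n^'n" and h :: "'k \<Rightarrow> real"
  assumes nonneg: "\<And>i a b. A i $ a $ b \<ge> 0"
    and delays: "\<And>i. h i > 0"
    and v: "\<And>a. 0 \<le> v$a" "v \<noteq> 0" "\<And>a. v$a \<le> (\<Sum>b\<in>UNIV. (\<Sum>i\<in>UNIV. A i) $ a $ b * v$b)"
  shows "\<not> dde_asymp_stable A h"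
proof
  assume st: "dde_asymp_stable A h"
  define hm where "hm = Min (range h)"
  have hm_le: "hm \<le> h i" for i unfolding hm_def by (rule Min_le) auto
  have hm_pos: "hm > 0"
  proof -
    have "hm \<in> range h" unfolding hm_def by (intro Min_in) auto
    then show ?thesis using delays by auto
  qed
  have stab1: "itr A h v m t = itr A h v (Suc m) t" if "t < real m * hm" for m t
    using that
  proof (induction m arbitrary: t)
    case 0 then show ?case using hm_pos by simp
  next
    case (Suc m)
    show ?case
    proof (cases "t < 0")
      case True then show ?thesis by simp
    next
      case False
      have "t - h i < real m * hm" for i using Suc.prems hm_le[of i] by (simp add: algebra_simps)
      then have "itr A h v m (t - h i) = itr A h v (Suc m) (t - h i)" for i using Suc.IH by blast
      then show ?thesis using False by simp
    qed
  qed
  have stab2: "itr A h v m t = itr A h v m' t" if "t < real m * hm" "m \<le> m'" for m m' t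
    using that(2)
  proof (induction m' rule: dec_induct)
    case base then show ?case by simp
  next
    case (step n)
    have "real m * hm \<le> real n * hm" using step.hyps hm_pos by (intro mult_right_mono) auto
    then have "t < real n * hm" using that(1) by linarith
    then show ?case using step.IH stab1[of t n] by simp
  qed
  have stab: "itr A h v m1 t = itr A h v m2 t" if "t < real m1 * hm" "t < real m2 * hm" for m1 m2 t
  proof (cases "m1 \<le> m2")
    case True then show ?thesis using stab2 that by blast
  next
    case False then show ?thesis using stab2[of t m2 m1] that by simp
  qed
  define N where "N t = Suc (nat \<lceil>t / hm\<rceil>)" for t
  have Nt: "t < real (N t) * hm" for t
  proof -
    have "t / hm \<le> real (nat \<lceil>t / hm\<rceil>)" by (rule real_nat_ceiling_ge)
    then have "t / hm < real (N t)" by (simp add: N_def)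
    then show ?thesis using hm_pos by (simp add: divide_less_eq)
  qed
  define x where "x t = itr A h v (N t) t" for t
  have sol: "dde_solution A h x"
    unfolding dde_solution_def
  proof (intro allI impI)
    fix t :: real assume t: "t \<ge> 0"
    define m where "m = nat \<lceil>t / hm\<rceil>"
    have "t / hm \<le> real m" unfolding m_def by (meson real_nat_ceiling_ge)
    then have tm: "t \<le> real m * hm" using hm_pos by (simp add: divide_le_eq)
    have "itr A h v m (t - h i) = x (t - h i)" for i
      unfolding x_def using tm delays[of i] Nt[of "t - h i"] by (intro stab) auto
    then show "x t = (\<Sum>i\<in>UNIV. A i *v x (t - h i))"
      using t by (simp add: x_def N_def m_def)
  qed
  have lower: "v$a \<le> itr A h v m t $ a" for m t a
  proof (induction m arbitrary: t a)
    case 0 then show ?case by simp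
  next
    case (Suc m)
    show ?case
    proof (cases "t < 0")
      case True then show ?thesis by simp
    next
      case False
      have "v$a \<le> (\<Sum>b\<in>UNIV. (\<Sum>i\<in>UNIV. A i) $ a $ b * v$b)" by (rule v(3))
      also have "\<dots> = (\<Sum>b\<in>UNIV. \<Sum>i\<in>UNIV. A i $ a $ b * v$b)"
        by (simp add: sum_component sum_distrib_right)
      also have "\<dots> = (\<Sum>i\<in>UNIV. \<Sum>b\<in>UNIV. A i $ a $ b * v$b)"
        by (rule sum.swap)
      also have "\<dots> \<le> (\<Sum>i\<in>UNIV. \<Sum>b\<in>UNIV. A i $ a $ b * itr A h v m (t - h i) $ b)"
        by (intro sum_mono mult_left_mono Suc.IH nonneg)
      also have "\<dots> = itr A h v (Suc m) t $ a" using False by (simp add: sum_component mv_comp)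
      finally show ?thesis .
    qed
  qed
  have init: "x t = v" if "t < 0" for t using that by (simp add: x_def N_def)
  have "bounded (x ` {- max_delay h..<0})"
  proof (rule bounded_subset)
    show "bounded {v}" by simp
    show "x ` {- max_delay h..<0} \<subseteq> {v}" using init by auto
  qed
  then have lim: "(x \<longlongrightarrow> 0) at_top" using st sol unfolding dde_asymp_stable_def by blast
  obtain a where "v$a \<noteq> 0" using v(2) by (auto simp: vec_eq_iff)
  then have va: "v$a > 0" using v(1)[of a] by simp
  have "((\<lambda>t. x t $ a) \<longlongrightarrow> 0) at_top" using tendsto_vec_nth[OF lim] by simp
  then have "\<forall>\<^sub>F t in at_top. x t $ a < v$a" using va by (rule order_tendstoD)
  then obtain T where "\<And>t. t \<ge> T \<Longrightarrow> x t $ a < v$a" unfolding eventually_at_top_linorder by blast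
  then have "x T $ a < v$a" by simp
  moreover have "v$a \<le> x T $ a" unfolding x_def by (rule lower)
  ultimately show False by simp
qed

lemma sum_delta_mult':
  fixes f :: "'b::finite \<Rightarrow> 'a::comm_semiring_1"
  shows "(\<Sum>c\<in>UNIV. (if b = c then 1 else 0) * f c) = f b"
proof -
  have "(\<Sum>c\<in>UNIV. (if b = c then 1 else 0) * f c) = (\<Sum>c\<in>UNIV. if b = c then f b else 0)"
    by (rule sum.cong) auto
  also have "\<dots> = f b" by simp
  finally show ?thesis .
qed

lemma sum_if_eq:
  fixes f :: "'b::finite \<Rightarrow> 'a::comm_semiring_1"
  shows "(\<Sum>q\<in>UNIV. (if p = q then c else 0) * f q) = c * f p"
proof -
  have "(\<Sum>q\<in>UNIV. (if p = q then c else 0) * f q) = (\<Sum>q\<in>UNIV. if p = q then c * f p else 0)"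
    by (rule sum.cong) auto
  also have "\<dots> = c * f p" by simp
  finally show ?thesis .
qed

lemma sum_pair: "sum f (UNIV::('a::finite \<times> 'b::finite) set) = (\<Sum>i\<in>UNIV. \<Sum>a\<in>UNIV. f (i,a))"
proof -
  have "(\<Sum>i\<in>UNIV. \<Sum>a\<in>UNIV. f (i,a)) = sum (case_prod (\<lambda>i a. f (i,a))) (UNIV \<times> UNIV)"
    by (rule sum.cartesian_product)
  then show ?thesis by simp
qed

lemma sum_plus: "sum f (UNIV::('a::finite + 'b::finite) set) = (\<Sum>a\<in>UNIV. f (Inl a)) + (\<Sum>b\<in>UNIV. f (Inr b))"
proof -
  have "sum f (UNIV <+> UNIV) = sum (f \<circ> Inl) UNIV + sum (f \<circ> Inr) UNIV" by (rule sum.Plus) simp_all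
  then show ?thesis by simp
qed

lemma Phi_comp: "(ones_kron_id ** block_row A) $ p $ q = A (fst q) $ snd p $ snd q"
  by (simp add: matrix_matrix_mult_def ones_kron_id_def block_row_def sum_delta_mult')

lemma vm_form1: "(\<mu> v* (- mat 1 + X)) $ p = (\<Sum>q\<in>UNIV. \<mu>$q * X$q$p) - (\<mu>$p :: real)"
proof -
  have e: "(- mat 1 + X) $ q $ p = X$q$p - (if q = p then 1 else 0)" for q by (simp add: mat_def)
  have "(\<mu> v* (- mat 1 + X)) $ p = (\<Sum>q\<in>UNIV. \<mu>$q * X$q$p) - (\<Sum>q\<in>UNIV. \<mu>$q * (if q = p then 1 else 0))"
    by (simp only: vm_comp e right_diff_distrib sum_subtractf)
  then show ?thesis by (simp only: sum_delta_mult)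
qed

lemma vm_form2: "(\<mu> v* (X - mat 1)) $ p = (\<Sum>q\<in>UNIV. \<mu>$q * X$q$p) - (\<mu>$p :: real)"
proof -
  have e: "(X - mat 1) $ q $ p = X$q$p - (if q = p then 1 else 0)" for q by (simp add: mat_def)
  have "(\<mu> v* (X - mat 1)) $ p = (\<Sum>q\<in>UNIV. \<mu>$q * X$q$p) - (\<Sum>q\<in>UNIV. \<mu>$q * (if q = p then 1 else 0))"
    by (simp only: vm_comp e right_diff_distrib sum_subtractf)
  then show ?thesis by (simp only: sum_delta_mult)
qed

lemma iv_v:
  fixes A :: "'k::finite \<Rightarrow> real^'n^'n"
  assumes nonneg: "\<And>i a b. A i $ a $ b \<ge> 0"
  shows "(\<exists>\<mu>::real^('k\<times>'n). (\<forall>p. 0 < \<mu>$p) \<and> (\<forall>p. (\<Sum>q\<in>UNIV. \<mu>$q * A (fst p) $ snd q $ snd p) < \<mu>$p))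
     \<longleftrightarrow> (\<exists>\<nu>::real^'n. (\<forall>a. 0 < \<nu>$a) \<and> (\<forall>b. (\<Sum>a\<in>UNIV. \<nu>$a * (\<Sum>i\<in>UNIV. A i) $ a $ b) < \<nu>$b))"
proof
  assume "\<exists>\<mu>::real^('k\<times>'n). (\<forall>p. 0 < \<mu>$p) \<and> (\<forall>p. (\<Sum>q\<in>UNIV. \<mu>$q * A (fst p) $ snd q $ snd p) < \<mu>$p)"
  then obtain \<mu> :: "real^('k\<times>'n)" where mu: "\<And>p. 0 < \<mu>$p" "\<And>p. (\<Sum>q\<in>UNIV. \<mu>$q * A (fst p) $ snd q $ snd p) < \<mu>$p"
    by blast
  define \<nu> where "\<nu> = (\<chi> a. \<Sum>i\<in>UNIV. \<mu>$(i,a))"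
  show "\<exists>\<nu>::real^'n. (\<forall>a. 0 < \<nu>$a) \<and> (\<forall>b. (\<Sum>a\<in>UNIV. \<nu>$a * (\<Sum>i\<in>UNIV. A i) $ a $ b) < \<nu>$b)"
  proof (intro exI[of _ \<nu>] conjI allI)
    fix a show "0 < \<nu>$a" unfolding \<nu>_def by (simp, rule sum_pos) (auto simp: mu)
  next
    fix b
    have "(\<Sum>a\<in>UNIV. \<nu>$a * (\<Sum>i\<in>UNIV. A i) $ a $ b) = (\<Sum>a\<in>UNIV. \<Sum>i\<in>UNIV. \<Sum>j\<in>UNIV. \<mu>$(i,a) * A j $ a $ b)"
      by (simp add: \<nu>_def sum_component sum_distrib_left sum_distrib_right) (rule sum.cong[OF refl], rule sum.swap)
    also have "\<dots> = (\<Sum>a\<in>UNIV. \<Sum>j\<in>UNIV. \<Sum>i\<in>UNIV. \<mu>$(i,a) * A j $ a $ b)"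
      by (rule sum.cong[OF refl], rule sum.swap)
    also have "\<dots> = (\<Sum>j\<in>UNIV. \<Sum>a\<in>UNIV. \<Sum>i\<in>UNIV. \<mu>$(i,a) * A j $ a $ b)"
      by (rule sum.swap)
    also have "\<dots> = (\<Sum>j\<in>UNIV. \<Sum>i\<in>UNIV. \<Sum>a\<in>UNIV. \<mu>$(i,a) * A j $ a $ b)"
      by (rule sum.cong[OF refl], rule sum.swap)
    also have "\<dots> < (\<Sum>j\<in>UNIV. \<mu>$(j,b))"
    proof (rule sum_strict_mono)
      fix j :: 'k
      show "(\<Sum>i\<in>UNIV. \<Sum>a\<in>UNIV. \<mu>$(i,a) * A j $ a $ b) < \<mu>$(j,b)"
        using mu(2)[of "(j,b)"] by (simp add: sum_pair)
    qed auto
    also have "\<dots> = \<nu>$b" by (simp add: \<nu>_def)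
    finally show "(\<Sum>a\<in>UNIV. \<nu>$a * (\<Sum>i\<in>UNIV. A i) $ a $ b) < \<nu>$b" .
  qed
next
  assume "\<exists>\<nu>::real^'n. (\<forall>a. 0 < \<nu>$a) \<and> (\<forall>b. (\<Sum>a\<in>UNIV. \<nu>$a * (\<Sum>i\<in>UNIV. A i) $ a $ b) < \<nu>$b)"
  then obtain \<nu> :: "real^'n" where nu: "\<And>a. 0 < \<nu>$a" "\<And>b. (\<Sum>a\<in>UNIV. \<nu>$a * (\<Sum>i\<in>UNIV. A i) $ a $ b) < \<nu>$b"
    by blast
  define K where "K = real CARD('k)"
  have K: "K > 0" unfolding K_def by simp
  define gp where "gp b = \<nu>$b - (\<Sum>a\<in>UNIV. \<nu>$a * (\<Sum>i\<in>UNIV. A i) $ a $ b)" for b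
  have gp: "gp b > 0" for b using nu(2)[of b] by (simp add: gp_def)
  define \<mu> :: "real^('k\<times>'n)" where "\<mu> = (\<chi> p. (\<Sum>a\<in>UNIV. \<nu>$a * A (fst p) $ a $ snd p) + gp (snd p) / K)"
  have colsum: "(\<Sum>i\<in>UNIV. \<mu>$(i,b)) = \<nu>$b" for b
  proof -
    have "(\<Sum>i\<in>UNIV. \<mu>$(i,b)) = (\<Sum>i\<in>UNIV. \<Sum>a\<in>UNIV. \<nu>$a * A i $ a $ b) + K * (gp b / K)"
      by (simp add: \<mu>_def sum.distrib K_def)
    also have "(\<Sum>i\<in>UNIV. \<Sum>a\<in>UNIV. \<nu>$a * A i $ a $ b) = (\<Sum>a\<in>UNIV. \<nu>$a * (\<Sum>i\<in>UNIV. A i) $ a $ b)"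
      by (simp add: sum_component sum_distrib_left) (rule sum.swap)
    finally show ?thesis using K by (simp add: gp_def)
  qed
  show "\<exists>\<mu>::real^('k\<times>'n). (\<forall>p. 0 < \<mu>$p) \<and> (\<forall>p. (\<Sum>q\<in>UNIV. \<mu>$q * A (fst p) $ snd q $ snd p) < \<mu>$p)"
  proof (intro exI[of _ \<mu>] conjI allI)
    fix p :: "'k \<times> 'n"
    have s0: "0 \<le> (\<Sum>a\<in>UNIV. \<nu>$a * A (fst p) $ a $ snd p)"
      by (intro sum_nonneg mult_nonneg_nonneg nonneg) (simp add: less_imp_le nu(1))
    show "0 < \<mu>$p" using s0 gp[of "snd p"] K by (simp add: \<mu>_def add_nonneg_pos)
    have "(\<Sum>q\<in>UNIV. \<mu>$q * A (fst p) $ snd q $ snd p) = (\<Sum>a\<in>UNIV. (\<Sum>i\<in>UNIV. \<mu>$(i,a)) * A (fst p) $ a $ snd p)"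
      by (simp add: sum_pair sum_distrib_right) (rule sum.swap)
    also have "\<dots> = (\<Sum>a\<in>UNIV. \<nu>$a * A (fst p) $ a $ snd p)" by (simp add: colsum)
    also have "\<dots> < \<mu>$p" using gp[of "snd p"] K by (simp add: \<mu>_def)
    finally show "(\<Sum>q\<in>UNIV. \<mu>$q * A (fst p) $ snd q $ snd p) < \<mu>$p" .
  qed
qed

lemma wcs:
  fixes w t :: "'a \<Rightarrow> real"
  assumes "finite I" and w: "\<And>q. q \<in> I \<Longrightarrow> w q \<ge> 0"
  shows "(\<Sum>q\<in>I. w q * t q)^2 \<le> (\<Sum>q\<in>I. w q) * (\<Sum>q\<in>I. w q * (t q)^2)"
proof -
  have L: "(\<Sum>q\<in>I. w q * t q)^2 = (\<Sum>q\<in>I. \<Sum>r\<in>I. w q * w r * (t q * t r))"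
    by (simp add: power2_eq_square sum_product algebra_simps)
  have R1: "(\<Sum>q\<in>I. w q) * (\<Sum>q\<in>I. w q * (t q)^2) = (\<Sum>q\<in>I. \<Sum>r\<in>I. w q * w r * (t r)^2)"
    by (simp add: sum_product algebra_simps)
  have R2: "(\<Sum>q\<in>I. \<Sum>r\<in>I. w q * w r * (t r)^2) = (\<Sum>q\<in>I. \<Sum>r\<in>I. w q * w r * (t q)^2)"
    by (subst sum.swap) (simp add: algebra_simps)
  have "(\<Sum>q\<in>I. \<Sum>r\<in>I. w q * w r * (2 * (t q * t r))) \<le> (\<Sum>q\<in>I. \<Sum>r\<in>I. w q * w r * ((t r)^2 + (t q)^2))"
  proof (intro sum_mono mult_left_mono)
    fix q r
    show "2 * (t q * t r) \<le> (t r)^2 + (t q)^2" using sum_squares_bound[of "t q" "t r"] by (simp add: algebra_simps)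
    assume "q \<in> I" "r \<in> I"
    then show "0 \<le> w q * w r" using w by simp
  qed
  then have "2 * (\<Sum>q\<in>I. \<Sum>r\<in>I. w q * w r * (t q * t r)) \<le> (\<Sum>q\<in>I. \<Sum>r\<in>I. w q * w r * (t r)^2) + (\<Sum>q\<in>I. \<Sum>r\<in>I. w q * w r * (t q)^2)"
    by (simp add: sum_distrib_left sum.distrib algebra_simps)
  then show ?thesis using L R1 R2 by simp
qed

definition Dg :: "('m::finite \<Rightarrow> real) \<Rightarrow> real^'m^'m" where
  "Dg d = (\<chi> p q. if p = q then d p else 0)"

definition Lm :: "('m::finite \<Rightarrow> real) \<Rightarrow> real^'m^'m \<Rightarrow> real^('m + 'm)^('m + 'm)" where
  "Lm d X = block2 (- Dg d) (transpose (Dg d ** X)) (Dg d ** X) (- Dg d)"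

lemma DgX: "(Dg d ** X)$p$q = d p * X$p$q"
  by (simp add: Dg_def matrix_matrix_mult_def sum_if_eq)

lemma Dg_comp: "Dg d $ p $ q = (if p = q then d p else 0)"
  by (simp add: Dg_def)

lemma Lm_comp:
  "Lm d X $ Inl p $ Inl q = - (if p = q then d p else 0)"
  "Lm d X $ Inl p $ Inr q = d q * X$q$p"
  "Lm d X $ Inr p $ Inl q = d p * X$p$q"
  "Lm d X $ Inr p $ Inr q = - (if p = q then d p else 0)"
  by (simp_all add: Lm_def block2_def transpose_def DgX Dg_comp)

lemma Lm_sym: "transpose (Lm d X) = Lm d X"
proof -
  have "Lm d X $ Q $ P = Lm d X $ P $ Q" for P Q
    by (cases P; cases Q) (auto simp: Lm_comp)
  then show ?thesis by (simp add: vec_eq_iff transpose_def)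
qed

lemma QF:
  fixes z :: "real^('m::finite + 'm)"
  shows "z \<bullet> (Lm d X *v z) = - (\<Sum>p\<in>UNIV. d p * (z$Inl p)^2)
      + 2 * (\<Sum>p\<in>UNIV. d p * z$Inr p * (\<Sum>q\<in>UNIV. X$p$q * z$Inl q)) - (\<Sum>p\<in>UNIV. d p * (z$Inr p)^2)"
proof -
  have rowL: "(Lm d X *v z) $ Inl p = - (d p * z$Inl p) + (\<Sum>q\<in>UNIV. d q * X$q$p * z$Inr q)" for p
    by (simp add: mv_comp sum_plus Lm_comp sum_negf sum_if_eq)
  have rowR: "(Lm d X *v z) $ Inr p = (\<Sum>q\<in>UNIV. d p * X$p$q * z$Inl q) - d p * z$Inr p" for p
    by (simp add: mv_comp sum_plus Lm_comp sum_negf sum_if_eq)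
  have cross: "(\<Sum>p\<in>UNIV. z$Inl p * (\<Sum>q\<in>UNIV. d q * X$q$p * z$Inr q))
      = (\<Sum>p\<in>UNIV. d p * z$Inr p * (\<Sum>q\<in>UNIV. X$p$q * z$Inl q))"
  proof -
    have "(\<Sum>p\<in>UNIV. z$Inl p * (\<Sum>q\<in>UNIV. d q * X$q$p * z$Inr q))
        = (\<Sum>p\<in>UNIV. \<Sum>q\<in>UNIV. z$Inl p * (d q * X$q$p * z$Inr q))" by (simp add: sum_distrib_left)
    also have "\<dots> = (\<Sum>q\<in>UNIV. \<Sum>p\<in>UNIV. z$Inl p * (d q * X$q$p * z$Inr q))" by (rule sum.swap)
    also have "\<dots> = (\<Sum>p\<in>UNIV. d p * z$Inr p * (\<Sum>q\<in>UNIV. X$p$q * z$Inl q))"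
      by (simp add: sum_distrib_left mult_ac)
    finally show ?thesis .
  qed
  have "z \<bullet> (Lm d X *v z) = (\<Sum>p\<in>UNIV. z$Inl p * (Lm d X *v z) $ Inl p) + (\<Sum>p\<in>UNIV. z$Inr p * (Lm d X *v z) $ Inr p)"
    by (simp add: inner_vec_def sum_plus)
  also have "\<dots> = (\<Sum>p\<in>UNIV. - (d p * (z$Inl p)^2) + z$Inl p * (\<Sum>q\<in>UNIV. d q * X$q$p * z$Inr q))
       + (\<Sum>p\<in>UNIV. z$Inr p * (\<Sum>q\<in>UNIV. d p * X$p$q * z$Inl q) - d p * (z$Inr p)^2)"
    by (simp add: rowL rowR algebra_simps power2_eq_square)
  also have "\<dots> = - (\<Sum>p\<in>UNIV. d p * (z$Inl p)^2) + (\<Sum>p\<in>UNIV. z$Inl p * (\<Sum>q\<in>UNIV. d q * X$q$p * z$Inr q))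
       + (\<Sum>p\<in>UNIV. d p * z$Inr p * (\<Sum>q\<in>UNIV. X$p$q * z$Inl q)) - (\<Sum>p\<in>UNIV. d p * (z$Inr p)^2)"
    by (simp add: sum.distrib sum_subtractf sum_negf sum_distrib_left mult_ac)
  also have "\<dots> = - (\<Sum>p\<in>UNIV. d p * (z$Inl p)^2)
      + 2 * (\<Sum>p\<in>UNIV. d p * z$Inr p * (\<Sum>q\<in>UNIV. X$p$q * z$Inl q)) - (\<Sum>p\<in>UNIV. d p * (z$Inr p)^2)"
    by (simp add: cross)
  finally show ?thesis .
qed

lemma lmi_suff:
  fixes X :: "real^'m^'m" and \<mu> :: "real^'m"
  assumes nn: "\<And>a b. X$a$b \<ge> 0" and mu: "\<And>a. \<mu>$a > 0" "\<And>b. (\<Sum>a\<in>UNIV. \<mu>$a * X$a$b) < \<mu>$b"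
  shows "\<exists>d. (\<forall>p. d p > 0) \<and> neg_def (Lm d X)"
proof -
  obtain \<nu> where nu: "\<And>a. 0 < \<nu>$a" "\<And>a. (\<Sum>b\<in>UNIV. X$a$b * \<nu>$b) < \<nu>$a"
    using left_to_right[OF nn mu] by blast
  define d where "d p = \<mu>$p / \<nu>$p" for p
  have dpos: "d p > 0" for p using mu(1) nu(1) by (simp add: d_def)
  have lyap: "(\<Sum>p\<in>UNIV. d p * (\<Sum>q\<in>UNIV. X$p$q * x q)^2) < (\<Sum>p\<in>UNIV. d p * (x q0)^2 * 0 + d p * (x p)^2)"
    if "x q0 \<noteq> 0" for x :: "'m \<Rightarrow> real" and q0
  proof -
    have each: "(\<Sum>q\<in>UNIV. X$p$q * x q)^2 \<le> \<nu>$p * (\<Sum>q\<in>UNIV. X$p$q * (x q)^2 / \<nu>$q)" for p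
    proof -
      have e: "(X$p$q * \<nu>$q) * (x q / \<nu>$q) = X$p$q * x q" for q
      proof -
        have "\<nu>$q \<noteq> 0" using nu(1)[of q] by simp
        then show ?thesis by (simp add: field_simps)
      qed
      have "(\<Sum>q\<in>UNIV. X$p$q * x q)^2 = (\<Sum>q\<in>UNIV. (X$p$q * \<nu>$q) * (x q / \<nu>$q))^2"
        by (simp only: e)
      also have "\<dots> \<le> (\<Sum>q\<in>UNIV. X$p$q * \<nu>$q) * (\<Sum>q\<in>UNIV. (X$p$q * \<nu>$q) * (x q / \<nu>$q)^2)"
        by (rule wcs) (auto intro: mult_nonneg_nonneg nn less_imp_le[OF nu(1)])
      also have "\<dots> \<le> \<nu>$p * (\<Sum>q\<in>UNIV. (X$p$q * \<nu>$q) * (x q / \<nu>$q)^2)"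
        using nu(2)[of p] by (intro mult_right_mono) (auto intro!: sum_nonneg mult_nonneg_nonneg nn less_imp_le[OF nu(1)])
      also have "(\<Sum>q\<in>UNIV. (X$p$q * \<nu>$q) * (x q / \<nu>$q)^2) = (\<Sum>q\<in>UNIV. X$p$q * (x q)^2 / \<nu>$q)"
        using nu(1) by (intro sum.cong refl) (simp add: power2_eq_square field_simps)
      finally show ?thesis .
    qed
    have "(\<Sum>p\<in>UNIV. d p * (\<Sum>q\<in>UNIV. X$p$q * x q)^2) \<le> (\<Sum>p\<in>UNIV. d p * (\<nu>$p * (\<Sum>q\<in>UNIV. X$p$q * (x q)^2 / \<nu>$q)))"
      by (intro sum_mono mult_left_mono each) (simp add: less_imp_le dpos)
    also have "\<dots> = (\<Sum>p\<in>UNIV. \<mu>$p * (\<Sum>q\<in>UNIV. X$p$q * (x q)^2 / \<nu>$q))"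
    proof (intro sum.cong refl)
      fix p
      have "\<nu>$p \<noteq> 0" using nu(1)[of p] by simp
      then show "d p * (\<nu>$p * (\<Sum>q\<in>UNIV. X$p$q * (x q)^2 / \<nu>$q)) = \<mu>$p * (\<Sum>q\<in>UNIV. X$p$q * (x q)^2 / \<nu>$q)"
        by (simp add: d_def)
    qed
    also have "\<dots> = (\<Sum>q\<in>UNIV. (\<Sum>p\<in>UNIV. \<mu>$p * X$p$q) * ((x q)^2 / \<nu>$q))"
      by (simp add: sum_distrib_left sum_distrib_right mult_ac) (rule sum.swap)
    also have "\<dots> < (\<Sum>q\<in>UNIV. \<mu>$q * ((x q)^2 / \<nu>$q))"
    proof (rule sum_strict_mono_ex1)
      show "\<forall>q\<in>UNIV. (\<Sum>p\<in>UNIV. \<mu>$p * X$p$q) * ((x q)^2 / \<nu>$q) \<le> \<mu>$q * ((x q)^2 / \<nu>$q)"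
      proof
        fix q :: 'm
        have "(x q)^2 / \<nu>$q \<ge> 0" using nu(1)[of q] by simp
        then show "(\<Sum>p\<in>UNIV. \<mu>$p * X$p$q) * ((x q)^2 / \<nu>$q) \<le> \<mu>$q * ((x q)^2 / \<nu>$q)"
          by (rule mult_right_mono[OF less_imp_le[OF mu(2)[of q]]])
      qed
      have "(x q0)^2 / \<nu>$q0 > 0" using that nu(1)[of q0] by simp
      then have "(\<Sum>p\<in>UNIV. \<mu>$p * X$p$q0) * ((x q0)^2 / \<nu>$q0) < \<mu>$q0 * ((x q0)^2 / \<nu>$q0)"
        by (rule mult_strict_right_mono[OF mu(2)[of q0]])
      then show "\<exists>q\<in>UNIV. (\<Sum>p\<in>UNIV. \<mu>$p * X$p$q) * ((x q)^2 / \<nu>$q) < \<mu>$q * ((x q)^2 / \<nu>$q)"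
        by blast
    qed simp
    also have "\<dots> = (\<Sum>p\<in>UNIV. d p * (x q0)^2 * 0 + d p * (x p)^2)"
      by (simp add: d_def)
    finally show ?thesis .
  qed
  have neg: "z \<bullet> (Lm d X *v z) < 0" if z: "z \<noteq> 0" for z :: "real^('m + 'm)"
  proof -
    define x where "x p = z$Inl p" for p
    define y where "y p = z$Inr p" for p
    define Fx where "Fx p = (\<Sum>q\<in>UNIV. X$p$q * x q)" for p
    have qf: "z \<bullet> (Lm d X *v z) = - (\<Sum>p\<in>UNIV. d p * (x p)^2) + 2 * (\<Sum>p\<in>UNIV. d p * y p * Fx p) - (\<Sum>p\<in>UNIV. d p * (y p)^2)"
      unfolding QF x_def y_def Fx_def ..
    have amgm: "2 * (\<Sum>p\<in>UNIV. d p * y p * Fx p) \<le> (\<Sum>p\<in>UNIV. d p * (y p)^2) + (\<Sum>p\<in>UNIV. d p * (Fx p)^2)"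
    proof -
      have "2 * (d p * y p * Fx p) \<le> d p * (y p)^2 + d p * (Fx p)^2" for p
      proof -
        have "0 \<le> d p * (y p - Fx p)^2" using dpos[of p] by simp
        then show ?thesis by (simp add: power2_diff algebra_simps)
      qed
      then have "(\<Sum>p\<in>UNIV. 2 * (d p * y p * Fx p)) \<le> (\<Sum>p\<in>UNIV. d p * (y p)^2 + d p * (Fx p)^2)"
        by (rule sum_mono)
      then show ?thesis by (simp add: sum_distrib_left sum.distrib)
    qed
    show ?thesis
    proof (cases "\<exists>q0. x q0 \<noteq> 0")
      case True
      then obtain q0 where "x q0 \<noteq> 0" by blast
      from lyap[of x q0, OF this] have "(\<Sum>p\<in>UNIV. d p * (Fx p)^2) < (\<Sum>p\<in>UNIV. d p * (x p)^2)"
        by (simp add: Fx_def)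
      then show ?thesis using qf amgm by linarith
    next
      case False
      then have x0: "x p = 0" for p by blast
      then have "Fx p = 0" for p by (simp add: Fx_def)
      then have qf': "z \<bullet> (Lm d X *v z) = - (\<Sum>p\<in>UNIV. d p * (y p)^2)" using qf x0 by simp
      obtain P where "z$P \<noteq> 0" using z by (auto simp: vec_eq_iff)
      then obtain p where yp: "y p \<noteq> 0" using x0 unfolding x_def y_def by (cases P) auto
      have "0 < (\<Sum>p\<in>UNIV. d p * (y p)^2)"
      proof (rule sum_pos2[of UNIV p])
        show "0 < d p * (y p)^2" using yp dpos[of p] by simp
        show "\<And>i. i \<in> UNIV \<Longrightarrow> 0 \<le> d i * (y i)^2" using dpos by (simp add: less_imp_le)
      qed auto
      then show ?thesis using qf' by simp
    qed
  qed
  show ?thesis using dpos neg Lm_sym unfolding neg_def_def by blast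
qed

lemma lmi_nec:
  fixes X :: "real^'m^'m"
  assumes nn: "\<And>a b. X$a$b \<ge> 0" and dpos: "\<And>p. d p > 0" and nd: "neg_def (Lm d X)"
  shows "\<exists>\<mu>. (\<forall>a. 0 < \<mu>$a) \<and> (\<forall>b. (\<Sum>a\<in>UNIV. \<mu>$a * X$a$b) < \<mu>$b)"
proof (rule ville)
  show "\<not> (\<exists>v. (\<forall>a. 0 \<le> v$a) \<and> v \<noteq> 0 \<and> (\<forall>a. v$a \<le> (\<Sum>b\<in>UNIV. X$a$b * v$b)))"
  proof
    assume "\<exists>v. (\<forall>a. 0 \<le> v$a) \<and> v \<noteq> 0 \<and> (\<forall>a. v$a \<le> (\<Sum>b\<in>UNIV. X$a$b * v$b))"
    then obtain v where v: "\<And>a. 0 \<le> v$a" "v \<noteq> 0" "\<And>a. v$a \<le> (\<Sum>b\<in>UNIV. X$a$b * v$b)" by blast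
    define Fv where "Fv p = (\<Sum>q\<in>UNIV. X$p$q * v$q)" for p
    define z :: "real^('m + 'm)" where "z = (\<chi> P. case P of Inl p \<Rightarrow> v$p | Inr p \<Rightarrow> Fv p)"
    have "z \<noteq> 0"
    proof
      assume "z = 0"
      then have "z $ Inl p = 0" for p by simp
      then have "v$p = 0" for p by (simp add: z_def)
      then show False using v(2) by (simp add: vec_eq_iff)
    qed
    then have lt: "z \<bullet> (Lm d X *v z) < 0" using nd unfolding neg_def_def by blast
    have "z \<bullet> (Lm d X *v z) = (\<Sum>p\<in>UNIV. d p * (Fv p)^2) - (\<Sum>p\<in>UNIV. d p * (v$p)^2)"
      unfolding QF by (simp add: z_def Fv_def power2_eq_square algebra_simps sum_distrib_left)
    also have "\<dots> \<ge> 0"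
    proof -
      have "(\<Sum>p\<in>UNIV. d p * (v$p)^2) \<le> (\<Sum>p\<in>UNIV. d p * (Fv p)^2)"
      proof (intro sum_mono mult_left_mono)
        fix p show "(v$p)^2 \<le> (Fv p)^2" using v(1)[of p] v(3)[of p] by (intro power_mono) (simp_all add: Fv_def)
        show "0 \<le> d p" using dpos[of p] by simp
      qed
      then show ?thesis by simp
    qed
    finally show False using lt by simp
  qed
qed

lemma sum_if_eq2:
  fixes f :: "'b::finite \<Rightarrow> 'a::comm_semiring_1"
  shows "(\<Sum>q\<in>UNIV. f q * (if p = q then c else 0)) = c * f p"
  by (subst mult.commute) (rule sum_if_eq)

lemma bd_Dg:
  assumes "\<And>i. is_diagonal (Q i)"
  shows "block_diag Q = Dg (\<lambda>p. Q (fst p) $ snd p $ snd p)"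
  using assms by (auto simp: vec_eq_iff block_diag_def Dg_def is_diagonal_def prod_eq_iff)

lemma pos_def_diag:
  fixes e :: "'n::finite \<Rightarrow> real"
  assumes "\<And>a. e a > 0"
  shows "pos_def (\<chi> a b. if a = b then e a else 0)"
  unfolding pos_def_def
proof (intro conjI allI impI)
  show "transpose (\<chi> a b. if a = b then e a else 0) = (\<chi> a b. if a = b then e a else (0::real))"
    by (auto simp: vec_eq_iff transpose_def)
next
  fix v :: "real^'n" assume v: "v \<noteq> 0"
  have "v \<bullet> ((\<chi> a b. if a = b then e a else 0) *v v) = (\<Sum>a\<in>UNIV. e a * (v$a)^2)"
    by (simp add: inner_vec_def mv_comp sum_if_eq2 power2_eq_square mult_ac)
  also have "\<dots> > 0"
  proof -
    obtain a where "v$a \<noteq> 0" using v by (auto simp: vec_eq_iff)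
    show ?thesis
    proof (rule sum_pos2[of UNIV a])
      show "0 < e a * (v$a)^2" using assms[of a] \<open>v$a \<noteq> 0\<close> by simp
      show "\<And>i. i \<in> UNIV \<Longrightarrow> 0 \<le> e i * (v$i)^2" using assms by (simp add: less_imp_le)
    qed auto
  qed
  finally show "0 < v \<bullet> ((\<chi> a b. if a = b then e a else 0) *v v)" .
qed

lemma diag_pos:
  fixes M :: "real^'n^'n"
  assumes "pos_def M"
  shows "M$a$a > 0"
proof -
  have "axis a (1::real) \<noteq> 0" by (simp add: axis_eq_0_iff)
  then have "0 < axis a 1 \<bullet> (M *v axis a 1)" using assms unfolding pos_def_def by blast
  also have "axis a 1 \<bullet> (M *v axis a 1) = (M *v axis a 1) $ a"
    by (simp only: inner_axis') simp
  also have "(M *v axis a 1) $ a = M$a$a"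
    by (simp add: mv_comp axis_def sum_delta_mult)
  finally show ?thesis .
qed

theorem theorem11:
  fixes A :: "'k::finite \<Rightarrow> real^'n^'n" and h :: "'k \<Rightarrow> real"
  assumes nonneg: "\<And>i a b. A i $ a $ b \<ge> 0"
    and delays: "\<And>i. h i > 0"
  shows "(dde_asymp_stable A h
            \<longleftrightarrow> (\<forall>\<omega> :: 'k \<Rightarrow> real.
                  spec_rad (\<chi> a b. \<Sum>i\<in>UNIV. exp (- \<i> * complex_of_real (\<omega> i)) * complex_of_real (A i $ a $ b)) < 1))
       \<and> ((\<forall>\<omega> :: 'k \<Rightarrow> real.
                  spec_rad (\<chi> a b. \<Sum>i\<in>UNIV. exp (- \<i> * complex_of_real (\<omega> i)) * complex_of_real (A i $ a $ b)) < 1)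
            \<longleftrightarrow> spec_rad (cmat (\<Sum>i\<in>UNIV. A i)) < 1)
       \<and> (spec_rad (cmat (\<Sum>i\<in>UNIV. A i)) < 1
            \<longleftrightarrow> (\<exists>\<mu> :: real^('k \<times> 'n). (\<forall>p. \<mu> $ p > 0) \<and>
                  (\<forall>p. (\<mu> v* (- mat 1 + ones_kron_id ** block_row A)) $ p < 0)))
       \<and> ((\<exists>\<mu> :: real^('k \<times> 'n). (\<forall>p. \<mu> $ p > 0) \<and>
                  (\<forall>p. (\<mu> v* (- mat 1 + ones_kron_id ** block_row A)) $ p < 0))
            \<longleftrightarrow> (\<exists>\<mu> :: real^'n. (\<forall>a. \<mu> $ a > 0) \<and>
                  (\<forall>a. (\<mu> v* ((\<Sum>i\<in>UNIV. A i) - mat 1)) $ a < 0)))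
       \<and> ((\<exists>\<mu> :: real^'n. (\<forall>a. \<mu> $ a > 0) \<and>
                  (\<forall>a. (\<mu> v* ((\<Sum>i\<in>UNIV. A i) - mat 1)) $ a < 0))
            \<longleftrightarrow> (\<exists>Q :: 'k \<Rightarrow> real^'n^'n. (\<forall>i. is_diagonal (Q i) \<and> pos_def (Q i)) \<and>
                  neg_def (block2 (- block_diag Q)
                                  (transpose (block_diag Q ** ones_kron_id ** block_row A))
                                  (block_diag Q ** ones_kron_id ** block_row A)
                                  (- block_diag Q))))"
proof -
  define S where "S = (\<Sum>i\<in>UNIV. A i)"
  have Sc: "S $ a $ b = (\<Sum>i\<in>UNIV. A i $ a $ b)" for a b unfolding S_def by (rule S_comp)
  have Snn: "S $ a $ b \<ge> 0" for a b unfolding Sc by (auto intro!: sum_nonneg nonneg)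
  define V where "V \<longleftrightarrow> (\<exists>\<nu>::real^'n. (\<forall>a. 0 < \<nu>$a) \<and> (\<forall>b. (\<Sum>a\<in>UNIV. \<nu>$a * S$a$b) < \<nu>$b))"
  define W where "W \<longleftrightarrow> (\<exists>v::real^'n. (\<forall>a. 0 \<le> v$a) \<and> v \<noteq> 0 \<and> (\<forall>a. v$a \<le> (\<Sum>b\<in>UNIV. S$a$b * v$b)))"
  have notV_W: "\<not> V \<Longrightarrow> W" unfolding V_def W_def using ville[of S] by blast
  have W_ge: "W \<Longrightarrow> 1 \<le> spec_rad (cmat S)" unfolding W_def using pf_specrad[of S] Snn by blast
  have V_lt: "V \<Longrightarrow> spec_rad M < 1" if dom: "\<And>a b. cmod (M$a$b) \<le> S$a$b" for M :: "complex^'n^'n"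
    unfolding V_def using specrad_lt1[of _ S M] dom by blast
  have cmS: "cmod (cmat S $ a $ b) \<le> S$a$b" for a b using Snn[of a b] by (simp add: cmat_def)
  have iii_V: "spec_rad (cmat S) < 1 \<longleftrightarrow> V"
    using V_lt[OF cmS] notV_W W_ge by force
  have Mw_dom: "cmod ((\<chi> a b. \<Sum>i\<in>UNIV. exp (- \<i> * complex_of_real (\<omega> i)) * complex_of_real (A i $ a $ b)) $ a $ b) \<le> S$a$b"
    for \<omega> :: "'k \<Rightarrow> real" and a b
  proof -
    have "cmod (\<Sum>i\<in>UNIV. exp (- \<i> * complex_of_real (\<omega> i)) * complex_of_real (A i $ a $ b))
        \<le> (\<Sum>i\<in>UNIV. cmod (exp (- \<i> * complex_of_real (\<omega> i)) * complex_of_real (A i $ a $ b)))"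
      by (rule norm_sum)
    also have "\<dots> = (\<Sum>i\<in>UNIV. A i $ a $ b)"
      by (rule sum.cong) (simp_all add: norm_mult norm_exp_eq_Re nonneg)
    finally show ?thesis by (simp add: Sc)
  qed
  have M0: "(\<chi> a b. \<Sum>i\<in>UNIV. exp (- \<i> * complex_of_real ((\<lambda>_. 0) i)) * complex_of_real (A i $ a $ b)) = cmat S"
    by (simp add: vec_eq_iff cmat_def Sc)
  have ii_iii: "(\<forall>\<omega> :: 'k \<Rightarrow> real.
                  spec_rad (\<chi> a b. \<Sum>i\<in>UNIV. exp (- \<i> * complex_of_real (\<omega> i)) * complex_of_real (A i $ a $ b)) < 1)
            \<longleftrightarrow> spec_rad (cmat (\<Sum>i\<in>UNIV. A i)) < 1"
  proof
    assume "\<forall>\<omega> :: 'k \<Rightarrow> real.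
                  spec_rad (\<chi> a b. \<Sum>i\<in>UNIV. exp (- \<i> * complex_of_real (\<omega> i)) * complex_of_real (A i $ a $ b)) < 1"
    from this[rule_format, of "\<lambda>_. 0"] show "spec_rad (cmat (\<Sum>i\<in>UNIV. A i)) < 1" using M0 by (simp add: S_def)
  next
    assume "spec_rad (cmat (\<Sum>i\<in>UNIV. A i)) < 1"
    then have V using iii_V by (simp add: S_def)
    then show "\<forall>\<omega> :: 'k \<Rightarrow> real.
                  spec_rad (\<chi> a b. \<Sum>i\<in>UNIV. exp (- \<i> * complex_of_real (\<omega> i)) * complex_of_real (A i $ a $ b)) < 1"
      using V_lt[OF Mw_dom] by blast
  qed
  have i_iii: "dde_asymp_stable A h \<longleftrightarrow> spec_rad (cmat S) < 1"
  proof
    assume st: "dde_asymp_stable A h"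
    show "spec_rad (cmat S) < 1"
    proof (rule ccontr)
      assume "\<not> spec_rad (cmat S) < 1"
      then have W using iii_V notV_W by blast
      then obtain v where v: "\<And>a. 0 \<le> v$a" "v \<noteq> 0" "\<And>a. v$a \<le> (\<Sum>b\<in>UNIV. S$a$b * v$b)"
        unfolding W_def by blast
      have "\<not> dde_asymp_stable A h"
        by (rule unstable[of A h v, OF nonneg delays v(1) v(2)]) (use v(3) in \<open>simp add: S_def\<close>)
      then show False using st by blast
    qed
  next
    assume "spec_rad (cmat S) < 1"
    then have V using iii_V by blast
    then obtain \<nu> where nu: "\<And>a. 0 < \<nu>$a" "\<And>b. (\<Sum>a\<in>UNIV. \<nu>$a * S$a$b) < \<nu>$b"
      unfolding V_def by blast
    obtain \<nu>' where nu': "\<And>a. 0 < \<nu>'$a" "\<And>a. (\<Sum>b\<in>UNIV. S$a$b * \<nu>'$b) < \<nu>'$a"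
      using left_to_right[OF Snn nu] by blast
    show "dde_asymp_stable A h"
      by (rule stab_suff[of A h \<nu>', OF nonneg delays nu'(1)]) (use nu'(2) in \<open>simp add: S_def\<close>)
  qed
  define Phi :: "real^('k \<times> 'n)^('k \<times> 'n)" where "Phi = ones_kron_id ** block_row A"
  have Phic: "Phi $ p $ q = A (fst q) $ snd p $ snd q" for p q unfolding Phi_def by (rule Phi_comp)
  have Phinn: "Phi $ p $ q \<ge> 0" for p q by (simp add: Phic nonneg)
  define IV where "IV \<longleftrightarrow> (\<exists>\<mu> :: real^('k \<times> 'n). (\<forall>p. \<mu> $ p > 0) \<and>
                  (\<forall>p. (\<mu> v* (- mat 1 + ones_kron_id ** block_row A)) $ p < 0))"
  have IV_alt: "IV \<longleftrightarrow> (\<exists>\<mu>::real^('k \<times> 'n). (\<forall>p. 0 < \<mu>$p) \<and> (\<forall>p. (\<Sum>q\<in>UNIV. \<mu>$q * Phi$q$p) < \<mu>$p))"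
    unfolding IV_def by (simp add: vm_form1 vm_form2 Phi_def[symmetric])
  have IV_V: "IV \<longleftrightarrow> V"
    unfolding IV_alt V_def Phic using iv_v[of A, OF nonneg] by (simp add: S_def)
  define Vv where "Vv \<longleftrightarrow> (\<exists>\<mu> :: real^'n. (\<forall>a. \<mu> $ a > 0) \<and>
                  (\<forall>a. (\<mu> v* ((\<Sum>i\<in>UNIV. A i) - mat 1)) $ a < 0))"
  have Vv_V: "Vv \<longleftrightarrow> V" unfolding Vv_def V_def by (simp add: vm_form2 S_def)
  define VI where "VI \<longleftrightarrow> (\<exists>Q :: 'k \<Rightarrow> real^'n^'n. (\<forall>i. is_diagonal (Q i) \<and> pos_def (Q i)) \<and>
                  neg_def (block2 (- block_diag Q)
                                  (transpose (block_diag Q ** ones_kron_id ** block_row A))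
                                  (block_diag Q ** ones_kron_id ** block_row A)
                                  (- block_diag Q)))"
  have blk: "block2 (- block_diag Q) (transpose (block_diag Q ** ones_kron_id ** block_row A))
                                  (block_diag Q ** ones_kron_id ** block_row A) (- block_diag Q) = Lm d Phi"
    if "block_diag Q = Dg d" for Q d
    unfolding Lm_def Phi_def that matrix_mul_assoc ..
  have VI_IV: "VI \<longleftrightarrow> IV"
  proof
    assume VI
    then obtain Q where Q: "\<And>i. is_diagonal (Q i)" "\<And>i. pos_def (Q i)"
      and nd: "neg_def (block2 (- block_diag Q)
                                  (transpose (block_diag Q ** ones_kron_id ** block_row A))
                                  (block_diag Q ** ones_kron_id ** block_row A)
                                  (- block_diag Q))" unfolding VI_def by blast
    define d where "d p = Q (fst p) $ snd p $ snd p" for p :: "'k \<times> 'n"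
    have dpos: "d p > 0" for p unfolding d_def by (rule diag_pos[OF Q(2)])
    have bd: "block_diag Q = Dg d" unfolding d_def by (rule bd_Dg[OF Q(1)])
    have "neg_def (Lm d Phi)" using nd unfolding blk[OF bd] .
    then show IV unfolding IV_alt using lmi_nec[where X=Phi and d=d, OF Phinn dpos] by blast
  next
    assume IV
    then obtain \<mu> :: "real^('k \<times> 'n)" where mu: "\<And>p. 0 < \<mu>$p" "\<And>p. (\<Sum>q\<in>UNIV. \<mu>$q * Phi$q$p) < \<mu>$p"
      unfolding IV_alt by blast
    obtain d where dpos: "\<And>p. d p > 0" and nd: "neg_def (Lm d Phi)" using lmi_suff[OF Phinn mu] by blast
    define Q where "Q i = (\<chi> a b. if a = b then d (i, a) else 0)" for i
    have Qd: "\<And>i. is_diagonal (Q i)" by (simp add: Q_def is_diagonal_def)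
    have Qp: "\<And>i. pos_def (Q i)" unfolding Q_def by (rule pos_def_diag) (simp add: dpos)
    have bd: "block_diag Q = Dg d" by (simp add: bd_Dg[OF Qd]) (simp add: Q_def)
    show VI unfolding VI_def by (rule exI[of _ Q]) (simp add: Qd Qp blk[OF bd] nd)
  qed
  show ?thesis
    using i_iii ii_iii iii_V IV_V Vv_V VI_IV unfolding IV_def Vv_def VI_def
    by (simp add: S_def)
qed

end
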